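(* Let $G$ be a connected undirected graph with positive edge weights, Laplacian $\mathbf{L}$ and degree matrix $\mathbf{D}$, such that the second smallest eigenvalue of its normalised Laplacian $\mathbf{D}^{-1/2}\mathbf{L}\mathbf{D}^{-1/2}$ is $\nu_2$. Let $C\subseteq V$ be a set of vertices with $F=V\setminus C$ nonempty and $|C|\ge 2$, let $\mathbf{S}=\mathbf{Sc}(\mathbf{L},C)$ be the Schur complement of $\mathbf{L}$ onto $C$, and let $\mathbf{D_C}$ be the restriction of $\mathbf{D}$ to $C$ (the original degrees). Then $\lambda_2(\mathbf{D_C}^{-1/2}\mathbf{S}\mathbf{D_C}^{-1/2})\ge\nu_2$.
   Context: Writing $\mathbf{L}=\begin{pmatrix}\mathbf{F}&\mathbf{B}\\ \mathbf{B}^\top&\mathbf{C}\end{pmatrix}$ with blocks indexed by $F$ and $C$, the Schur complement is $\mathbf{Sc}(\mathbf{L},C)=\mathbf{C}-\mathbf{B}^\top\mathbf{F}^{-1}\mathbf{B}$. $\lambda_2(\cdot)$ denotes the second smallest eigenvalue of a symmetric matrix. *)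

theory Defs
  imports "Jordan_Normal_Form.DL_Submatrix" "Jordan_Normal_Form.Gauss_Jordan_Elimination"
    "Jordan_Normal_Form.Char_Poly" "HOL-Library.Multiset"
begin

text \<open>Weighted undirected graphs on the vertex set {0..<n}, given by a weight
  function w; an edge {i,j} is present iff w i j > 0.\<close>

definition weighted_graph :: "nat \<Rightarrow> (nat \<Rightarrow> nat \<Rightarrow> real) \<Rightarrow> bool" where
  "weighted_graph n w \<longleftrightarrow>
     (\<forall>i<n. \<forall>j<n. w i j = w j i \<and> w i j \<ge> 0) \<and> (\<forall>i<n. w i i = 0)"

definition graph_connected :: "nat \<Rightarrow> (nat \<Rightarrow> nat \<Rightarrow> real) \<Rightarrow> bool" where
  "graph_connected n w \<longleftrightarrow>
     (\<forall>u<n. \<forall>v<n. (u, v) \<in> {(i, j). i < n \<and> j < n \<and> w i j > 0}\<^sup>*)"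

definition wdeg :: "nat \<Rightarrow> (nat \<Rightarrow> nat \<Rightarrow> real) \<Rightarrow> nat \<Rightarrow> real" where
  "wdeg n w i = (\<Sum>j<n. w i j)"

definition degree_mat :: "nat \<Rightarrow> (nat \<Rightarrow> nat \<Rightarrow> real) \<Rightarrow> real mat" where
  "degree_mat n w = mat n n (\<lambda>(i, j). if i = j then wdeg n w i else 0)"

definition laplacian :: "nat \<Rightarrow> (nat \<Rightarrow> nat \<Rightarrow> real) \<Rightarrow> real mat" where
  "laplacian n w = degree_mat n w - mat n n (\<lambda>(i, j). w i j)"

definition diag_inv_sqrt :: "real mat \<Rightarrow> real mat" where
  "diag_inv_sqrt D = mat (dim_row D) (dim_col D)
      (\<lambda>(i, j). if i = j then 1 / sqrt (D $$ (i, i)) else 0)"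

text \<open>Schur complement of L onto C (blocks indexed by F = complement of C and C,
  in increasing order of indices): C-block minus B^T F^{-1} B.\<close>
definition schur_compl :: "real mat \<Rightarrow> nat set \<Rightarrow> real mat" where
  "schur_compl L C =
     (let F = {0..<dim_row L} - C;
          B = submatrix L F C
      in submatrix L C C - transpose_mat B * the (mat_inverse (submatrix L F F)) * B)"

definition sorted_eigenvalues :: "real mat \<Rightarrow> real list" where
  "sorted_eigenvalues A = sorted_list_of_multiset (proots (char_poly A))"

definition lambda2 :: "real mat \<Rightarrow> real" where
  "lambda2 A = sorted_eigenvalues A ! 1"

end

theory Submission
  imports Defs "Jordan_Normal_Form.Schur_Decomposition" "HOL-Combinatorics.Permutations"
begin

interpretation of_real_poly_hom: map_poly_inj_idom_hom "of_real :: real \<Rightarrow> complex" ..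

lemma map_poly_of_real_linear_factors:
  "map_poly complex_of_real (\<Prod>e\<leftarrow>es. [:-e,1:]) = (\<Prod>e\<leftarrow>es. [:- complex_of_real e,1:])"
proof (induction es)
  case Nil then show ?case by simp
next
  case (Cons a es)
  have "map_poly complex_of_real (\<Prod>e\<leftarrow>a#es. [:-e,1:])
     = map_poly complex_of_real ([:-a,1:] * (\<Prod>e\<leftarrow>es. [:-e,1:]))" by simp
  also have "\<dots> = map_poly complex_of_real [:-a,1:] * map_poly complex_of_real (\<Prod>e\<leftarrow>es. [:-e,1:])"
    by (rule of_real_poly_hom.hom_mult)
  also have "map_poly complex_of_real [:-a,1:] = [:- complex_of_real a, 1:]" by simp
  finally show ?case using Cons by simp
qed

lemma sym_eig_real:
  fixes M :: "real mat"
  assumes M: "M \<in> carrier_mat k k" and sym: "\<And>i j. i < k \<Longrightarrow> j < k \<Longrightarrow> M $$ (i,j) = M $$ (j,i)"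
    and ev: "eigenvalue (map_mat complex_of_real M) a"
  shows "Im a = 0"
proof -
  let ?Mc = "map_mat complex_of_real M"
  have Mc: "?Mc \<in> carrier_mat k k" using M by simp
  obtain v where v: "v \<in> carrier_vec k" "v \<noteq> 0\<^sub>v k" "?Mc *\<^sub>v v = a \<cdot>\<^sub>v v"
    using ev Mc unfolding eigenvalue_def eigenvector_def by auto
  have row: "(\<Sum>j<k. complex_of_real (M$$(i,j)) * v$j) = a * v$i" if i: "i < k" for i
  proof -
    have "(?Mc *\<^sub>v v) $ i = (a \<cdot>\<^sub>v v) $ i" using v(3) by simp
    moreover have "(?Mc *\<^sub>v v) $ i = (\<Sum>j<k. complex_of_real (M$$(i,j)) * v$j)"
      using i M v(1) by (auto simp: scalar_prod_def atLeast0LessThan intro!: sum.cong)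
    moreover have "(a \<cdot>\<^sub>v v) $ i = a * v$i" using i v(1) by simp
    ultimately show ?thesis by simp
  qed
  define s where "s = (\<Sum>i<k. cnj (v$i) * (\<Sum>j<k. complex_of_real (M$$(i,j)) * v$j))"
  define r where "r = (\<Sum>i<k. cnj (v$i) * v$i)"
  have "s = (\<Sum>i<k. cnj (v$i) * (a * v$i))" unfolding s_def
    by (intro sum.cong refl) (simp add: row)
  also have "\<dots> = a * r" unfolding r_def by (simp add: sum_distrib_left algebra_simps)
  finally have s_eq: "s = a * r" .
  have "cnj s = (\<Sum>i<k. v$i * (\<Sum>j<k. complex_of_real (M$$(i,j)) * cnj (v$j)))"
    unfolding s_def by simp
  also have "\<dots> = (\<Sum>i<k. \<Sum>j<k. v$i * complex_of_real (M$$(i,j)) * cnj (v$j))"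
    by (simp add: sum_distrib_left algebra_simps)
  also have "\<dots> = (\<Sum>j<k. \<Sum>i<k. v$i * complex_of_real (M$$(i,j)) * cnj (v$j))"
    by (rule sum.swap)
  also have "\<dots> = (\<Sum>j<k. \<Sum>i<k. cnj (v$j) * complex_of_real (M$$(j,i)) * v$i)"
    by (intro sum.cong refl, simp add: sym algebra_simps)
  also have "\<dots> = s" unfolding s_def by (simp add: sum_distrib_left algebra_simps)
  finally have cs: "cnj s = s" .
  have r_real: "r = complex_of_real (\<Sum>i<k. (cmod (v$i))\<^sup>2)"
    unfolding r_def of_real_sum
    by (intro sum.cong refl) (simp only: complex_norm_square mult.commute)
  obtain i where i: "i < k" "v$i \<noteq> 0" using v(1,2) by (metis carrier_vecD eq_vecI index_zero_vec)
  have "(\<Sum>i<k. (cmod (v$i))\<^sup>2) > 0"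
  proof -
    have "(cmod (v$i))\<^sup>2 > 0" using i by simp
    moreover have "(cmod (v$i))\<^sup>2 \<le> (\<Sum>i<k. (cmod (v$i))\<^sup>2)"
      by (rule member_le_sum) (use i in auto)
    ultimately show ?thesis by linarith
  qed
  hence r0: "r \<noteq> 0" "cnj r = r" unfolding r_real by (simp_all only: of_real_eq_0_iff complex_cnj_complex_of_real)
  have "a = s / r" using s_eq r0 by simp
  hence "cnj a = a" using cs r0 by simp
  thus ?thesis by (metis Reals_cnj_iff complex_is_Real_iff)
qed

lemma sym_char_poly_split:
  fixes M :: "real mat"
  assumes M: "M \<in> carrier_mat k k" and sym: "\<And>i j. i < k \<Longrightarrow> j < k \<Longrightarrow> M $$ (i,j) = M $$ (j,i)"
  shows "\<exists>es. char_poly M = (\<Prod>e\<leftarrow>es. [:-e,1:])"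
proof -
  let ?Mc = "map_mat complex_of_real M"
  have Mc: "?Mc \<in> carrier_mat k k" using M by simp
  obtain as where as: "char_poly ?Mc = (\<Prod>a\<leftarrow>as. [:-a,1:])"
    using char_poly_factorized[OF Mc] by blast
  have re: "Im a = 0" if "a \<in> set as" for a
  proof (rule sym_eig_real[OF M sym])
    show "eigenvalue ?Mc a" unfolding eigenvalue_root_char_poly[OF Mc] as
      using linear_poly_root[OF that] .
  qed (auto)
  have asr: "map (complex_of_real \<circ> Re) as = as"
    by (rule map_idI) (use re in \<open>auto simp: complex_eq_iff\<close>)
  have "map_poly complex_of_real (char_poly M) = char_poly ?Mc"
    by (rule of_real_hom.char_poly_hom[OF M, symmetric])
  also have "\<dots> = (\<Prod>a\<leftarrow>map (complex_of_real \<circ> Re) as. [:-a,1:])" unfolding as asr ..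
  also have "\<dots> = map_poly complex_of_real (\<Prod>e\<leftarrow>map Re as. [:-e,1:])"
    unfolding map_poly_of_real_linear_factors by (simp add: o_def)
  finally have "char_poly M = (\<Prod>e\<leftarrow>map Re as. [:-e,1:])"
    using of_real_poly_hom.injectivity by blast
  thus ?thesis by blast
qed

definition mtrace :: "real mat \<Rightarrow> real" where
  "mtrace A = (\<Sum>i<dim_row A. A $$ (i,i))"

lemma mtrace_comm:
  assumes A: "A \<in> carrier_mat n m" and B: "B \<in> carrier_mat m n"
  shows "mtrace (A * B) = mtrace (B * A)"
proof -
  have "mtrace (A * B) = (\<Sum>i<n. \<Sum>j<m. A $$ (i,j) * B $$ (j,i))"
    unfolding mtrace_def using A B
    by (auto simp: scalar_prod_def atLeast0LessThan intro!: sum.cong)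
  also have "\<dots> = (\<Sum>j<m. \<Sum>i<n. B $$ (j,i) * A $$ (i,j))"
    by (subst sum.swap) (simp add: mult.commute)
  also have "\<dots> = mtrace (B * A)"
    unfolding mtrace_def using A B
    by (auto simp: scalar_prod_def atLeast0LessThan intro!: sum.cong)
  finally show ?thesis .
qed

lemma mtrace_similar:
  assumes "similar_mat M B" "M \<in> carrier_mat k k"
  shows "mtrace M = mtrace B"
proof -
  from similar_matD[OF assms(1)] obtain n P Q where
    carr: "{M, B, P, Q} \<subseteq> carrier_mat n n" and PQ: "P * Q = 1\<^sub>m n" and QP: "Q * P = 1\<^sub>m n"
    and MB: "M = P * B * Q" by blast
  hence cs: "M \<in> carrier_mat n n" "B \<in> carrier_mat n n" "P \<in> carrier_mat n n" "Q \<in> carrier_mat n n" by auto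
  have "mtrace M = mtrace (P * (B * Q))" using MB cs by (simp add: assoc_mult_mat)
  also have "\<dots> = mtrace ((B * Q) * P)" by (rule mtrace_comm) (use cs in auto)
  also have "(B * Q) * P = B" using cs QP by (simp add: assoc_mult_mat)
  finally show ?thesis .
qed

lemma sym_nonzero_trace_eig:
  fixes M :: "real mat"
  assumes M: "M \<in> carrier_mat k k" and sym: "\<And>i j. i < k \<Longrightarrow> j < k \<Longrightarrow> M $$ (i,j) = M $$ (j,i)"
    and tr: "mtrace M \<noteq> 0"
  shows "\<exists>l x. l \<noteq> 0 \<and> x \<in> carrier_vec k \<and> x \<noteq> 0\<^sub>v k \<and> M *\<^sub>v x = l \<cdot>\<^sub>v x"
proof -
  obtain es where es: "char_poly M = (\<Prod>e\<leftarrow>es. [:-e,1:])" using sym_char_poly_split[OF M sym] by blast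
  define B where "B = schur_upper_triangular M es"
  note sch = schur_upper_triangular[OF M es, folded B_def]
  have "char_poly M = char_poly B" by (rule char_poly_similar[OF sch(3)])
  also have "\<dots> = (\<Prod>a\<leftarrow>diag_mat B. [:-a,1:])" by (rule char_poly_upper_triangular[OF sch(1,2)])
  finally have cpB: "char_poly M = (\<Prod>a\<leftarrow>diag_mat B. [:-a,1:])" .
  have "mtrace B \<noteq> 0" using tr mtrace_similar[OF sch(3) M] by simp
  then obtain i where i: "i < k" "B $$ (i,i) \<noteq> 0" unfolding mtrace_def using sch(1)
    by (metis (no_types, lifting) carrier_matD(1) lessThan_iff sum.neutral)
  have "B $$ (i,i) \<in> set (diag_mat B)" using i sch(1) unfolding diag_mat_def by auto
  hence "poly (char_poly M) (B $$ (i,i)) = 0" unfolding cpB by (rule linear_poly_root)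
  hence "eigenvalue M (B $$ (i,i))" using eigenvalue_root_char_poly[OF M] by simp
  then obtain x where "eigenvector M x (B $$ (i,i))" unfolding eigenvalue_def by blast
  thus ?thesis using i M unfolding eigenvector_def by auto
qed

declare minus_carrier_mat[simp]

definition orthonormal :: "nat \<Rightarrow> real vec list \<Rightarrow> bool" where
  "orthonormal k vs \<longleftrightarrow> set vs \<subseteq> carrier_vec k \<and>
     (\<forall>i<length vs. \<forall>j<length vs. vs!i \<bullet> vs!j = (if i = j then 1 else 0))"

lemma mtrace_add: "A \<in> carrier_mat n n \<Longrightarrow> B \<in> carrier_mat n n \<Longrightarrow> mtrace (A + B) = mtrace A + mtrace B"
  unfolding mtrace_def by (simp add: sum.distrib)
lemma mtrace_minus: "A \<in> carrier_mat n n \<Longrightarrow> B \<in> carrier_mat n n \<Longrightarrow> mtrace (A - B) = mtrace A - mtrace B"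
  unfolding mtrace_def by (simp add: sum_subtractf)
lemma mtrace_smult: "A \<in> carrier_mat n n \<Longrightarrow> mtrace (c \<cdot>\<^sub>m A) = c * mtrace A"
  unfolding mtrace_def sum_distrib_left by (rule sum.cong) auto
lemma mtrace_one: "mtrace (1\<^sub>m n) = real n"
  unfolding mtrace_def by simp

lemma transpose_smult_mat: "(c \<cdot>\<^sub>m A)\<^sup>T = c \<cdot>\<^sub>m A\<^sup>T"
  by (rule eq_matI) auto

lemma zero_mat_mult_vec[simp]: "x \<in> carrier_vec k \<Longrightarrow> 0\<^sub>m m k *\<^sub>v x = (0\<^sub>v m :: real vec)"
  by (rule eq_vecI) (auto simp: scalar_prod_def)

lemma mat_mult_zero_vec[simp]: "A \<in> carrier_mat n m \<Longrightarrow> A *\<^sub>v 0\<^sub>v m = (0\<^sub>v n :: real vec)"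
  by (rule eq_vecI) (auto simp: scalar_prod_def)

lemma vec_minus_zero[simp]: "y \<in> carrier_vec n \<Longrightarrow> y - 0\<^sub>v n = (y :: real vec)"
  by (rule eq_vecI) auto

lemma smult_vec_zero_cancel:
  assumes "(l::real) \<noteq> 0" "y \<in> carrier_vec m" "l \<cdot>\<^sub>v y = 0\<^sub>v m"
  shows "y = 0\<^sub>v m"
proof (rule eq_vecI)
  fix i assume i: "i < dim_vec (0\<^sub>v m :: real vec)"
  hence "(l \<cdot>\<^sub>v y) $ i = 0" using assms(3) by simp
  hence "l * y $ i = 0" using i assms(2) by simp
  thus "y $ i = 0\<^sub>v m $ i" using assms(1) i by simp
qed (use assms in simp)

lemma orthonormal_VtV:
  assumes "orthonormal k vs"
  shows "(mat_of_cols k vs)\<^sup>T * mat_of_cols k vs = 1\<^sub>m (length vs)"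
proof (rule eq_matI)
  fix i j assume i: "i < dim_row (1\<^sub>m (length vs))" and j: "j < dim_col (1\<^sub>m (length vs))"
  have vi: "vs!i \<in> carrier_vec k" "vs!j \<in> carrier_vec k" using assms i j unfolding orthonormal_def by auto
  have "((mat_of_cols k vs)\<^sup>T * mat_of_cols k vs) $$ (i,j) = col (mat_of_cols k vs) i \<bullet> col (mat_of_cols k vs) j"
    using i j by simp
  also have "\<dots> = vs!i \<bullet> vs!j" using i j vi by (simp add: col_mat_of_cols)
  also have "\<dots> = 1\<^sub>m (length vs) $$ (i,j)" using assms i j unfolding orthonormal_def by simp
  finally show "((mat_of_cols k vs)\<^sup>T * mat_of_cols k vs) $$ (i,j) = 1\<^sub>m (length vs) $$ (i,j)" .
qed auto

lemma mat_transpose_entry_sym: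
  assumes "M\<^sup>T = M" "M \<in> carrier_mat k k" "i < k" "j < k"
  shows "M $$ (i,j) = M $$ (j,i)"
  using assms by (metis carrier_matD index_transpose_mat(1))

lemma eig_step:
  fixes M :: "real mat"
  assumes M: "M \<in> carrier_mat k k" and sym: "M\<^sup>T = M"
    and on: "orthonormal k vs" and m: "length vs < k"
    and eig: "\<And>i. i < length vs \<Longrightarrow> M *\<^sub>v (vs!i) = es!i \<cdot>\<^sub>v (vs!i)"
  shows "\<exists>u l. u \<in> carrier_vec k \<and> u \<bullet> u = 1 \<and> (\<forall>i<length vs. vs!i \<bullet> u = 0) \<and> M *\<^sub>v u = l \<cdot>\<^sub>v u"
proof -
  define m where "m = length vs"
  define V where "V = mat_of_cols k vs"
  have V: "V \<in> carrier_mat k m" unfolding V_def m_def by simp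
  have Vt: "V\<^sup>T \<in> carrier_mat m k" using V by simp
  have VtV: "V\<^sup>T * V = 1\<^sub>m m" using orthonormal_VtV[OF on] unfolding V_def m_def .
  define Q where "Q = 1\<^sub>m k - V * V\<^sup>T"
  have Q: "Q \<in> carrier_mat k k" unfolding Q_def using V by simp
  have VtQ: "V\<^sup>T * Q = 0\<^sub>m m k"
  proof -
    have "V\<^sup>T * Q = V\<^sup>T * 1\<^sub>m k - V\<^sup>T * (V * V\<^sup>T)" unfolding Q_def
      by (rule mult_minus_distrib_mat) (use V in auto)
    also have "V\<^sup>T * (V * V\<^sup>T) = (V\<^sup>T * V) * V\<^sup>T" using V by (simp add: assoc_mult_mat)
    also have "\<dots> = V\<^sup>T" using VtV Vt by simp
    also have "V\<^sup>T * 1\<^sub>m k = V\<^sup>T" using Vt by simp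
    finally show ?thesis using Vt by simp
  qed
  have Qt: "Q\<^sup>T = Q"
  proof -
    have "Q\<^sup>T = (1\<^sub>m k)\<^sup>T - (V * V\<^sup>T)\<^sup>T" unfolding Q_def
      by (rule transpose_minus) (use V in auto)
    also have "(V * V\<^sup>T)\<^sup>T = (V\<^sup>T)\<^sup>T * V\<^sup>T" by (rule transpose_mult) (use V in auto)
    finally show ?thesis unfolding Q_def by simp
  qed
  have trQ: "mtrace Q = real k - real m"
  proof -
    have "mtrace (V * V\<^sup>T) = mtrace (V\<^sup>T * V)" by (rule mtrace_comm) (use V in auto)
    also have "\<dots> = real m" using VtV mtrace_one by simp
    finally have "mtrace (V * V\<^sup>T) = real m" .
    hence "mtrace (1\<^sub>m k - V * V\<^sup>T) = mtrace (1\<^sub>m k) - real m"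
      using mtrace_minus[of "1\<^sub>m k" k "V * V\<^sup>T"] V by simp
    thus ?thesis unfolding Q_def mtrace_one .
  qed
  define c where "c = (1 - mtrace (Q * M * Q)) / (real k - real m)"
  define N where "N = Q * M * Q + c \<cdot>\<^sub>m Q"
  have N: "N \<in> carrier_mat k k" unfolding N_def using Q M by simp
  have km: "real k - real m \<noteq> 0" using m unfolding m_def by simp
  have trN: "mtrace N = 1"
  proof -
    have "mtrace N = mtrace (Q * M * Q) + mtrace (c \<cdot>\<^sub>m Q)" unfolding N_def
      by (rule mtrace_add) (use Q M in auto)
    also have "mtrace (c \<cdot>\<^sub>m Q) = c * (real k - real m)" using mtrace_smult[OF Q] trQ by simp
    also have "c * (real k - real m) = 1 - mtrace (Q * M * Q)" unfolding c_def using km by simp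
    finally show ?thesis by simp
  qed
  have Nt: "N\<^sup>T = N"
  proof -
    have "(Q * M * Q)\<^sup>T = Q\<^sup>T * (Q * M)\<^sup>T" by (rule transpose_mult) (use Q M in auto)
    also have "(Q * M)\<^sup>T = M\<^sup>T * Q\<^sup>T" by (rule transpose_mult) (use Q M in auto)
    finally have "(Q * M * Q)\<^sup>T = Q * M * Q" using Qt sym Q M by (simp add: assoc_mult_mat)
    moreover have "N\<^sup>T = (Q * M * Q)\<^sup>T + (c \<cdot>\<^sub>m Q)\<^sup>T" unfolding N_def
      by (rule transpose_add) (use Q M in auto)
    ultimately show ?thesis unfolding N_def using Qt by (simp add: transpose_smult_mat)
  qed
  obtain l x where lx: "l \<noteq> 0" "x \<in> carrier_vec k" "x \<noteq> 0\<^sub>v k" "N *\<^sub>v x = l \<cdot>\<^sub>v x"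
    using sym_nonzero_trace_eig[OF N _ ] trN mat_transpose_entry_sym[OF Nt N] by force
  have VtN: "V\<^sup>T * N = 0\<^sub>m m k"
  proof -
    have "V\<^sup>T * N = V\<^sup>T * (Q * M * Q) + V\<^sup>T * (c \<cdot>\<^sub>m Q)" unfolding N_def
      by (rule mult_add_distrib_mat) (use Vt Q M in auto)
    also have "V\<^sup>T * (Q * M * Q) = (V\<^sup>T * Q) * M * Q"
    proof -
      have "V\<^sup>T * ((Q * M) * Q) = (V\<^sup>T * (Q * M)) * Q" by (rule assoc_mult_mat[symmetric]) (use Vt Q M in auto)
      also have "V\<^sup>T * (Q * M) = (V\<^sup>T * Q) * M" by (rule assoc_mult_mat[symmetric]) (use Vt Q M in auto)
      finally show ?thesis .
    qed
    also have "V\<^sup>T * (c \<cdot>\<^sub>m Q) = c \<cdot>\<^sub>m (V\<^sup>T * Q)" using Vt Q by (simp add: mult_smult_distrib)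
    finally show ?thesis using VtQ M Q by simp
  qed
  have Vtx: "V\<^sup>T *\<^sub>v x = 0\<^sub>v m"
  proof -
    have "l \<cdot>\<^sub>v (V\<^sup>T *\<^sub>v x) = V\<^sup>T *\<^sub>v (l \<cdot>\<^sub>v x)" using Vt lx by (simp add: mult_mat_vec)
    also have "\<dots> = V\<^sup>T *\<^sub>v (N *\<^sub>v x)" using lx by simp
    also have "\<dots> = (V\<^sup>T * N) *\<^sub>v x" using Vt N lx by (simp add: assoc_mult_mat_vec)
    also have "\<dots> = 0\<^sub>v m" using VtN lx by simp
    finally have "l \<cdot>\<^sub>v (V\<^sup>T *\<^sub>v x) = 0\<^sub>v m" .
    thus ?thesis using lx(1) Vt smult_vec_zero_cancel by (metis mult_mat_vec_carrier lx(2))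
  qed
  have orth_x: "vs!i \<bullet> x = 0" if i: "i < m" for i
  proof -
    have "(V\<^sup>T *\<^sub>v x) $ i = 0" using Vtx i by simp
    moreover have vi: "vs!i \<in> carrier_vec k" using on i unfolding orthonormal_def m_def by auto
    moreover have "(V\<^sup>T *\<^sub>v x) $ i = vs!i \<bullet> x" using i V vi unfolding V_def m_def
      by (auto simp: col_mat_of_cols)
    ultimately show ?thesis by simp
  qed
  have Qv: "Q *\<^sub>v y = y" if y: "y \<in> carrier_vec k" "V\<^sup>T *\<^sub>v y = 0\<^sub>v m" for y
  proof -
    have "Q *\<^sub>v y = 1\<^sub>m k *\<^sub>v y - (V * V\<^sup>T) *\<^sub>v y" unfolding Q_def
      by (rule minus_mult_distrib_mat_vec) (use V y in auto)
    also have "(V * V\<^sup>T) *\<^sub>v y = V *\<^sub>v (V\<^sup>T *\<^sub>v y)" using V y by (simp add: assoc_mult_mat_vec)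
    finally show ?thesis using y V by simp
  qed
  have VtMx: "V\<^sup>T *\<^sub>v (M *\<^sub>v x) = 0\<^sub>v m"
  proof (rule eq_vecI)
    fix i assume "i < dim_vec (0\<^sub>v m :: real vec)"
    hence i: "i < m" by simp
    have vi: "vs!i \<in> carrier_vec k" using on i unfolding orthonormal_def m_def by auto
    have "(V\<^sup>T *\<^sub>v (M *\<^sub>v x)) $ i = vs!i \<bullet> (M *\<^sub>v x)" using i V vi unfolding V_def m_def
      by (auto simp: col_mat_of_cols)
    also have "\<dots> = (M\<^sup>T *\<^sub>v vs!i) \<bullet> x" using transpose_vec_mult_scalar[OF M lx(2) vi] by simp
    also have "\<dots> = es!i * (vs!i \<bullet> x)" using sym eig[of i] i vi lx(2) unfolding m_def by simp
    also have "\<dots> = 0" using orth_x[OF i] by simp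
    finally show "(V\<^sup>T *\<^sub>v (M *\<^sub>v x)) $ i = 0\<^sub>v m $ i" using i by simp
  qed (use Vt in simp)
  have Mx: "M *\<^sub>v x = (l - c) \<cdot>\<^sub>v x"
  proof -
    have "N *\<^sub>v x = (Q * M * Q) *\<^sub>v x + (c \<cdot>\<^sub>m Q) *\<^sub>v x" unfolding N_def
      by (rule add_mult_distrib_mat_vec) (use Q M lx in auto)
    also have "(Q * M * Q) *\<^sub>v x = Q *\<^sub>v (M *\<^sub>v (Q *\<^sub>v x))"
    proof -
      have "(Q * M * Q) *\<^sub>v x = (Q * M) *\<^sub>v (Q *\<^sub>v x)" by (rule assoc_mult_mat_vec) (use Q M lx in auto)
      also have "\<dots> = Q *\<^sub>v (M *\<^sub>v (Q *\<^sub>v x))" by (rule assoc_mult_mat_vec) (use Q M lx in auto)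
      finally show ?thesis .
    qed
    also have "Q *\<^sub>v x = x" using Qv lx(2) Vtx by simp
    also have "Q *\<^sub>v (M *\<^sub>v x) = M *\<^sub>v x" using Qv VtMx M lx(2) by simp
    also have "(c \<cdot>\<^sub>m Q) *\<^sub>v x = c \<cdot>\<^sub>v (Q *\<^sub>v x)" by (rule eq_vecI) (use Q lx in \<open>auto simp: scalar_prod_def sum_distrib_left algebra_simps\<close>)
    also have "Q *\<^sub>v x = x" using Qv lx(2) Vtx by simp
    finally have "l \<cdot>\<^sub>v x = M *\<^sub>v x + c \<cdot>\<^sub>v x" using lx by simp
    note eq = this
    show ?thesis
    proof (rule eq_vecI)
      fix i assume "i < dim_vec ((l - c) \<cdot>\<^sub>v x)"
      hence i: "i < k" using lx(2) by simp
      have "(l \<cdot>\<^sub>v x) $ i = (M *\<^sub>v x + c \<cdot>\<^sub>v x) $ i" using eq by simp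
      hence "l * x $ i = (M *\<^sub>v x) $ i + c * x $ i" using i M lx(2) by simp
      thus "(M *\<^sub>v x) $ i = ((l - c) \<cdot>\<^sub>v x) $ i" using i lx(2) by (simp add: algebra_simps)
    qed (use M lx(2) in simp)
  qed
  define u where "u = (1 / sqrt (x \<bullet> x)) \<cdot>\<^sub>v x"
  have xx: "x \<bullet> x > 0"
  proof -
    obtain i where i: "i < k" "x $ i \<noteq> 0" using lx(2,3)
      by (metis carrier_vecD eq_vecI index_zero_vec(1) index_zero_vec(2))
    have "x \<bullet> x = (\<Sum>j<k. x $ j * x $ j)" using lx(2) by (simp add: scalar_prod_def atLeast0LessThan)
    also have "\<dots> \<ge> x $ i * x $ i"
      by (rule member_le_sum) (use i in auto)
    finally show ?thesis using i(2) by (meson not_square_less_zero order_less_le_trans zero_less_mult_iff linorder_neqE_linordered_idom)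
  qed
  define a where "a = 1 / sqrt (x \<bullet> x)"
  have aa: "a * a * (x \<bullet> x) = 1" unfolding a_def using xx
    by (simp add: real_sqrt_mult[symmetric])
  have "u \<in> carrier_vec k" unfolding u_def using lx by simp
  moreover have "u \<bullet> u = 1"
  proof -
    have "u \<bullet> u = a * (x \<bullet> (a \<cdot>\<^sub>v x))" unfolding u_def a_def[symmetric]
      by (rule smult_scalar_prod_distrib) (use lx in auto)
    also have "x \<bullet> (a \<cdot>\<^sub>v x) = a * (x \<bullet> x)"
      by (rule scalar_prod_smult_distrib) (use lx in auto)
    finally show ?thesis using aa by (simp add: mult.assoc)
  qed
  moreover have "\<forall>i<length vs. vs!i \<bullet> u = 0"
  proof (intro allI impI)
    fix i assume i: "i < length vs"
    have vi: "vs!i \<in> carrier_vec k" using on i unfolding orthonormal_def by auto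
    have "vs!i \<bullet> u = a * (vs!i \<bullet> x)" unfolding u_def a_def[symmetric]
      by (rule scalar_prod_smult_distrib) (use lx vi in auto)
    thus "vs!i \<bullet> u = 0" using orth_x i unfolding m_def by simp
  qed
  moreover have "M *\<^sub>v u = (l - c) \<cdot>\<^sub>v u"
  proof -
    have "M *\<^sub>v u = a \<cdot>\<^sub>v (M *\<^sub>v x)" unfolding u_def a_def[symmetric]
      by (rule mult_mat_vec) (use M lx in auto)
    also have "\<dots> = a \<cdot>\<^sub>v ((l - c) \<cdot>\<^sub>v x)" using Mx by simp
    also have "\<dots> = (l - c) \<cdot>\<^sub>v u" unfolding u_def a_def[symmetric]
      by (simp add: smult_smult_assoc mult.commute)
    finally show ?thesis .
  qed
  ultimately show ?thesis by blast
qed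

lemma eig_basis_ind:
  fixes M :: "real mat"
  assumes M: "M \<in> carrier_mat k k" and sym: "M\<^sup>T = M"
  shows "m \<le> k \<Longrightarrow> \<exists>vs es. length vs = m \<and> length es = m \<and> orthonormal k vs \<and>
           (\<forall>i<m. M *\<^sub>v (vs!i) = es!i \<cdot>\<^sub>v (vs!i))"
proof (induction m)
  case 0
  show ?case by (rule exI[of _ "[]"], rule exI[of _ "[]"]) (simp add: orthonormal_def)
next
  case (Suc m)
  then obtain vs es where IH: "length vs = m" "length es = m" "orthonormal k vs"
    "\<forall>i<m. M *\<^sub>v (vs!i) = es!i \<cdot>\<^sub>v (vs!i)" by auto
  obtain u l where ul: "u \<in> carrier_vec k" "u \<bullet> u = 1" "\<forall>i<length vs. vs!i \<bullet> u = 0" "M *\<^sub>v u = l \<cdot>\<^sub>v u"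
    using eig_step[OF M sym IH(3), of es] IH Suc.prems by auto
  have vsc: "set vs \<subseteq> carrier_vec k" using IH(3) unfolding orthonormal_def by auto
  have on': "orthonormal k (vs @ [u])"
    unfolding orthonormal_def
  proof (intro conjI allI impI)
    show "set (vs @ [u]) \<subseteq> carrier_vec k" using vsc ul by auto
  next
    fix i j assume i: "i < length (vs @ [u])" and j: "j < length (vs @ [u])"
    show "(vs @ [u]) ! i \<bullet> (vs @ [u]) ! j = (if i = j then 1 else 0)"
    proof (cases "i < m")
      case True note ii = this
      show ?thesis
      proof (cases "j < m")
        case True
        thus ?thesis using ii IH(1,3) unfolding orthonormal_def by (simp add: nth_append)
      next
        case False
        hence "j = m" using j IH(1) by simp
        thus ?thesis using ii IH(1) ul(3) by (simp add: nth_append)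
      qed
    next
      case False
      hence im: "i = m" using i IH(1) by simp
      show ?thesis
      proof (cases "j < m")
        case True
        have vj: "vs!j \<in> carrier_vec k" using vsc True IH(1) by auto
        have "u \<bullet> vs!j = vs!j \<bullet> u" by (rule comm_scalar_prod[OF ul(1) vj])
        thus ?thesis using im True IH(1) ul(3) by (simp add: nth_append)
      next
        case False
        hence "j = m" using j IH(1) by simp
        thus ?thesis using im IH(1) ul(2) by (simp add: nth_append)
      qed
    qed
  qed
  show ?case
  proof (intro exI conjI)
    show "length (vs @ [u]) = Suc m" "length (es @ [l]) = Suc m" using IH by auto
    show "orthonormal k (vs @ [u])" by (rule on')
    show "\<forall>i<Suc m. M *\<^sub>v (vs @ [u]) ! i = (es @ [l]) ! i \<cdot>\<^sub>v (vs @ [u]) ! i"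
    proof (intro allI impI)
      fix i assume "i < Suc m"
      thus "M *\<^sub>v (vs @ [u]) ! i = (es @ [l]) ! i \<cdot>\<^sub>v (vs @ [u]) ! i"
        using IH ul(4) by (cases "i < m") (auto simp: nth_append)
    qed
  qed
qed

lemma proots_linear_factors: "proots (\<Prod>e\<leftarrow>es. [:-e,1:]) = mset (es :: real list)"
proof (induction es)
  case Nil then show ?case by simp
next
  case (Cons a es)
  have ne: "(\<Prod>e\<leftarrow>es. [:-e,1:]) \<noteq> (0 :: real poly)"
    by (auto simp: prod_list_zero_iff)
  have "proots (\<Prod>e\<leftarrow>a#es. [:-e,1:]) = proots ([:-a,1:] * (\<Prod>e\<leftarrow>es. [:-e,1:]))" by simp
  also have "\<dots> = proots [:-a,1:] + proots (\<Prod>e\<leftarrow>es. [:-e,1:])"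
    by (rule proots_mult) (use ne in auto)
  also have "\<dots> = {#a#} + mset es" using Cons proots_linear_factor[of "-a"] by simp
  finally show ?case by simp
qed

lemma spectral:
  fixes M :: "real mat"
  assumes M: "M \<in> carrier_mat k k" and sym: "M\<^sup>T = M"
  shows "\<exists>vs es. length vs = k \<and> length es = k \<and> orthonormal k vs \<and>
           (\<forall>i<k. M *\<^sub>v (vs!i) = es!i \<cdot>\<^sub>v (vs!i)) \<and> mset es = proots (char_poly M) \<and>
           (\<forall>x\<in>carrier_vec k. x \<bullet> x = (\<Sum>i<k. (vs!i \<bullet> x)^2) \<and>
                x \<bullet> (M *\<^sub>v x) = (\<Sum>i<k. es!i * (vs!i \<bullet> x)^2))"
proof -
  obtain vs es where b: "length vs = k" "length es = k" "orthonormal k vs"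
    "\<forall>i<k. M *\<^sub>v (vs!i) = es!i \<cdot>\<^sub>v (vs!i)"
    using eig_basis_ind[OF M sym, of k] by auto
  have vsc: "\<And>i. i < k \<Longrightarrow> vs!i \<in> carrier_vec k" using b(1,3) unfolding orthonormal_def by auto
  define V where "V = mat_of_cols k vs"
  have V: "V \<in> carrier_mat k k" unfolding V_def using b(1) mat_of_cols_carrier(1)[of k vs] by simp
  have Vt: "V\<^sup>T \<in> carrier_mat k k" using V by simp
  have VtV: "V\<^sup>T * V = 1\<^sub>m k" using orthonormal_VtV[OF b(3)] b(1) unfolding V_def by simp
  have VVt: "V * V\<^sup>T = 1\<^sub>m k" by (rule mat_mult_left_right_inverse[OF Vt V VtV])
  define D where "D = V\<^sup>T * M * V"
  have D: "D \<in> carrier_mat k k" unfolding D_def using V M by simp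
  have colV: "\<And>i. i < k \<Longrightarrow> col V i = vs!i" unfolding V_def using vsc b(1) by (simp add: col_mat_of_cols)
  have Dij: "D $$ (i,j) = (if i = j then es!i else 0)" if ij: "i < k" "j < k" for i j
  proof -
    have "D = V\<^sup>T * (M * V)" unfolding D_def by (rule assoc_mult_mat) (use V M in auto)
    hence "D $$ (i,j) = row (V\<^sup>T) i \<bullet> col (M * V) j" using ij V M by simp
    also have "row (V\<^sup>T) i = vs!i" using ij V colV by simp
    also have "col (M * V) j = M *\<^sub>v col V j" by (rule col_mult2) (use ij V M in auto)
    also have "\<dots> = es!j \<cdot>\<^sub>v vs!j" using b(4) ij colV by simp
    also have "vs!i \<bullet> (es!j \<cdot>\<^sub>v vs!j) = es!j * (vs!i \<bullet> vs!j)"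
      by (rule scalar_prod_smult_distrib) (use vsc ij in auto)
    also have "\<dots> = (if i = j then es!i else 0)" using b(1,3) ij unfolding orthonormal_def by simp
    finally show ?thesis .
  qed
  have ut: "upper_triangular D" unfolding upper_triangular_def using D Dij by auto
  have dg: "diag_mat D = es" unfolding diag_mat_def using D Dij b(2)
    by (intro nth_equalityI) auto
  have MD: "M = V * D * V\<^sup>T"
  proof -
    have "V * D * V\<^sup>T = (V * V\<^sup>T) * M * (V * V\<^sup>T)" unfolding D_def using V M
      by (simp add: assoc_mult_mat[of _ k k _ k _ k])
    also have "\<dots> = M" using VVt M by simp
    finally show ?thesis by simp
  qed
  have sim: "similar_mat M D" unfolding similar_mat_def similar_mat_wit_def
    by (rule exI[of _ V], rule exI[of _ "V\<^sup>T"]) (use M D V VVt VtV MD in auto)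
  have cp: "char_poly M = (\<Prod>e\<leftarrow>es. [:-e,1:])"
    using char_poly_similar[OF sim] char_poly_upper_triangular[OF D ut] dg by simp
  have quad: "x \<bullet> x = (\<Sum>i<k. (vs!i \<bullet> x)^2) \<and> x \<bullet> (M *\<^sub>v x) = (\<Sum>i<k. es!i * (vs!i \<bullet> x)^2)"
    if x: "x \<in> carrier_vec k" for x
  proof -
    define c where "c = V\<^sup>T *\<^sub>v x"
    have c: "c \<in> carrier_vec k" unfolding c_def using Vt x by simp
    have ci: "c $ i = vs!i \<bullet> x" if "i < k" for i unfolding c_def using that V colV x by simp
    have xc: "x = V *\<^sub>v c" unfolding c_def using V Vt x VVt
      by (simp add: assoc_mult_mat_vec[symmetric, of V k k "V\<^sup>T" k x])
    have gen: "x \<bullet> (A *\<^sub>v x) = c \<bullet> ((V\<^sup>T * A * V) *\<^sub>v c)" if A: "A \<in> carrier_mat k k" for A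
    proof -
      have VAV: "V\<^sup>T * A * V \<in> carrier_mat k k" using V A by (metis mult_carrier_mat transpose_carrier_mat)
      have "x \<bullet> (A *\<^sub>v x) = (V *\<^sub>v c) \<bullet> (A *\<^sub>v (V *\<^sub>v c))" using xc by simp
      also have "\<dots> = (A *\<^sub>v (V *\<^sub>v c)) \<bullet> (V *\<^sub>v c)"
        by (rule comm_scalar_prod[of _ k]) (use V A c in auto)
      also have "\<dots> = (V\<^sup>T *\<^sub>v (A *\<^sub>v (V *\<^sub>v c))) \<bullet> c"
        by (rule transpose_vec_mult_scalar[symmetric]) (use V A c in auto)
      also have "V\<^sup>T *\<^sub>v (A *\<^sub>v (V *\<^sub>v c)) = (V\<^sup>T * A * V) *\<^sub>v c"
      proof -
        have "(V\<^sup>T * A * V) *\<^sub>v c = (V\<^sup>T * A) *\<^sub>v (V *\<^sub>v c)"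
          by (rule assoc_mult_mat_vec) (use V A c in auto)
        also have "\<dots> = V\<^sup>T *\<^sub>v (A *\<^sub>v (V *\<^sub>v c))"
          by (rule assoc_mult_mat_vec) (use V A c in auto)
        finally show ?thesis by simp
      qed
      also have "((V\<^sup>T * A * V) *\<^sub>v c) \<bullet> c = c \<bullet> ((V\<^sup>T * A * V) *\<^sub>v c)"
        by (rule comm_scalar_prod[of _ k]) (use VAV c in auto)
      finally show ?thesis .
    qed
    have "x \<bullet> x = x \<bullet> (1\<^sub>m k *\<^sub>v x)" using x by simp
    also have "\<dots> = c \<bullet> ((V\<^sup>T * 1\<^sub>m k * V) *\<^sub>v c)" by (rule gen) simp
    also have "V\<^sup>T * 1\<^sub>m k * V = 1\<^sub>m k" using Vt V VtV by simp
    also have "c \<bullet> (1\<^sub>m k *\<^sub>v c) = (\<Sum>i<k. (vs!i \<bullet> x)^2)" using c ci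
      by (simp add: scalar_prod_def atLeast0LessThan power2_eq_square)
    finally have q1: "x \<bullet> x = (\<Sum>i<k. (vs!i \<bullet> x)^2)" .
    have "x \<bullet> (M *\<^sub>v x) = c \<bullet> (D *\<^sub>v c)" unfolding D_def by (rule gen[OF M])
    also have "D *\<^sub>v c = vec k (\<lambda>i. es!i * c$i)"
    proof (rule eq_vecI)
      fix i assume "i < dim_vec (vec k (\<lambda>i. es!i * c$i))"
      hence i: "i < k" by simp
      have "(D *\<^sub>v c) $ i = (\<Sum>j<k. D $$ (i,j) * c $ j)" using D c i
        by (simp add: scalar_prod_def atLeast0LessThan)
      also have "\<dots> = (\<Sum>j<k. (if j = i then es!i * c$i else 0))"
        by (intro sum.cong refl) (use i Dij in auto)
      also have "\<dots> = es!i * c$i" using i by simp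
      finally show "(D *\<^sub>v c) $ i = vec k (\<lambda>i. es!i * c$i) $ i" using i by simp
    qed (use D in simp)
    also have "c \<bullet> vec k (\<lambda>i. es!i * c$i) = (\<Sum>i<k. es!i * (vs!i \<bullet> x)^2)"
      using c ci by (simp add: scalar_prod_def atLeast0LessThan power2_eq_square algebra_simps)
    finally show ?thesis using q1 by simp
  qed
  show ?thesis
  proof (intro exI conjI)
    show "mset es = proots (char_poly M)" using cp proots_linear_factors by simp
  qed (use b quad in auto)
qed

lemma lambda2_perm:
  fixes M :: "real mat"
  assumes "mset es = proots (char_poly M)" "length es = k"
  shows "\<exists>p. p permutes {..<k} \<and> (\<forall>t<k. sort es ! t = es ! p t) \<and>
    lambda2 M = sort es ! 1 \<and> sorted (sort es) \<and> length (sort es) = k"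
proof -
  have l2: "lambda2 M = sort es ! 1" unfolding lambda2_def sorted_eigenvalues_def
    using assms[symmetric] by (simp add: sorted_list_of_multiset_mset)
  obtain p where p: "p permutes {..<length es}" "permute_list p es = sort es"
    using mset_eq_permutation[of "sort es" es] by auto
  have "sort es ! t = es ! p t" if "t < length es" for t
    using permute_list_nth[OF p(1) that] p(2) by simp
  thus ?thesis using p l2 assms(2) by auto
qed

lemma lambda2_upper:
  fixes M :: "real mat"
  assumes M: "M \<in> carrier_mat k k" and sym: "M\<^sup>T = M" and k: "k \<ge> 2"
  shows "\<exists>u0 u1 b0 b1. u0 \<in> carrier_vec k \<and> u1 \<in> carrier_vec k \<and> u0 \<bullet> u0 = 1 \<and> u1 \<bullet> u1 = 1 \<and>
     u0 \<bullet> u1 = 0 \<and> M *\<^sub>v u0 = b0 \<cdot>\<^sub>v u0 \<and> M *\<^sub>v u1 = b1 \<cdot>\<^sub>v u1 \<and> b0 \<le> lambda2 M \<and> b1 \<le> lambda2 M"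
proof -
  obtain vs es where sp: "length vs = k" "length es = k" "orthonormal k vs"
    "\<forall>i<k. M *\<^sub>v (vs!i) = es!i \<cdot>\<^sub>v (vs!i)" "mset es = proots (char_poly M)"
    using spectral[OF M sym] by blast
  from lambda2_perm[OF sp(5) sp(2)] obtain p where p: "p permutes {..<k}" "\<forall>t<k. sort es ! t = es ! p t"
    "lambda2 M = sort es ! 1" "sorted (sort es)" "length (sort es) = k"
    by blast
  have p0: "p 0 < k" using permutes_in_image[OF p(1), of 0] k by simp
  have p1: "p 1 < k" using permutes_in_image[OF p(1), of 1] k by simp
  have p01: "p 0 \<noteq> p 1" using permutes_inj[OF p(1)] unfolding inj_def by (metis zero_neq_one)
  have "sort es ! 0 \<le> sort es ! 1" using p(4,5) k by (simp add: sorted_nth_mono)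
  hence b0: "es ! p 0 \<le> lambda2 M" and b1: "es ! p 1 \<le> lambda2 M" using p k by auto
  have on: "\<forall>i<k. \<forall>j<k. vs!i \<bullet> vs!j = (if i = j then 1 else 0)" "set vs \<subseteq> carrier_vec k"
    using sp(1,3) unfolding orthonormal_def by auto
  have c0: "vs ! p 0 \<in> carrier_vec k" using on(2) p0 sp(1) by auto
  have c1: "vs ! p 1 \<in> carrier_vec k" using on(2) p1 sp(1) by auto
  have n0: "vs ! p 0 \<bullet> vs ! p 0 = 1" using on(1) p0 by simp
  have n1: "vs ! p 1 \<bullet> vs ! p 1 = 1" using on(1) p1 by simp
  have o01: "vs ! p 0 \<bullet> vs ! p 1 = 0" using on(1) p0 p1 p01 by simp
  have e0: "M *\<^sub>v vs ! p 0 = es ! p 0 \<cdot>\<^sub>v vs ! p 0" using sp(4) p0 by simp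
  have e1: "M *\<^sub>v vs ! p 1 = es ! p 1 \<cdot>\<^sub>v vs ! p 1" using sp(4) p1 by simp
  show ?thesis using c0 c1 n0 n1 o01 e0 e1 b0 b1 by blast
qed

lemma lambda2_lower:
  fixes M :: "real mat"
  assumes M: "M \<in> carrier_mat k k" and sym: "M\<^sup>T = M" and k: "k \<ge> 2"
  shows "\<exists>v0 \<in> carrier_vec k. \<forall>z \<in> carrier_vec k. v0 \<bullet> z = 0 \<longrightarrow> z \<bullet> (M *\<^sub>v z) \<ge> lambda2 M * (z \<bullet> z)"
proof -
  obtain vs es where sp: "length vs = k" "length es = k" "orthonormal k vs"
    "mset es = proots (char_poly M)"
    "\<forall>x\<in>carrier_vec k. x \<bullet> x = (\<Sum>i<k. (vs!i \<bullet> x)^2) \<and> x \<bullet> (M *\<^sub>v x) = (\<Sum>i<k. es!i * (vs!i \<bullet> x)^2)"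
    using spectral[OF M sym] by blast
  from lambda2_perm[OF sp(4) sp(2)] obtain p where p: "p permutes {..<k}" "\<forall>t<k. sort es ! t = es ! p t"
    "lambda2 M = sort es ! 1" "sorted (sort es)" "length (sort es) = k"
    by blast
  have p0: "p 0 < k" using permutes_in_image[OF p(1), of 0] k by simp
  have big: "es ! i \<ge> lambda2 M" if i: "i < k" "i \<noteq> p 0" for i
  proof -
    have "i \<in> p ` {..<k}" using permutes_image[OF p(1)] i by auto
    then obtain t where t: "t < k" "i = p t" by auto
    have "t \<noteq> 0" using t i(2) by (cases t) auto
    hence "sort es ! 1 \<le> sort es ! t" using p(4,5) t by (simp add: sorted_nth_mono)
    thus ?thesis using p(2,3) t by simp
  qed
  have "vs ! p 0 \<in> carrier_vec k" using sp(1,3) p0 unfolding orthonormal_def by (simp add: subset_code(1))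
  moreover have "\<forall>z \<in> carrier_vec k. vs ! p 0 \<bullet> z = 0 \<longrightarrow> z \<bullet> (M *\<^sub>v z) \<ge> lambda2 M * (z \<bullet> z)"
  proof (intro ballI impI)
    fix z :: "real vec" assume z: "z \<in> carrier_vec k" and o: "vs ! p 0 \<bullet> z = 0"
    have "lambda2 M * (z \<bullet> z) = (\<Sum>i<k. lambda2 M * (vs!i \<bullet> z)^2)"
      using sp(5) z by (simp add: sum_distrib_left)
    also have "\<dots> \<le> (\<Sum>i<k. es!i * (vs!i \<bullet> z)^2)"
    proof (rule sum_mono)
      fix i assume "i \<in> {..<k}"
      hence i: "i < k" by simp
      show "lambda2 M * (vs!i \<bullet> z)^2 \<le> es!i * (vs!i \<bullet> z)^2"
      proof (cases "i = p 0")
        case True thus ?thesis using o by simp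
      next
        case False thus ?thesis using big[OF i False] by (simp add: mult_right_mono)
      qed
    qed
    also have "\<dots> = z \<bullet> (M *\<^sub>v z)" using sp(5) z by simp
    finally show "z \<bullet> (M *\<^sub>v z) \<ge> lambda2 M * (z \<bullet> z)" .
  qed
  ultimately show ?thesis by blast
qed

definition sel :: "nat \<Rightarrow> nat set \<Rightarrow> real mat" where
  "sel n S = mat n (card S) (\<lambda>(i,a). if i = pick S a then 1 else 0)"

lemma sel_carrier[simp]: "sel n S \<in> carrier_mat n (card S)"
  unfolding sel_def by simp

lemma sel_dims[simp]: "dim_row (sel n S) = n" "dim_col (sel n S) = card S"
  unfolding sel_def by simp_all

lemma card_restrict: "I \<subseteq> {0..<n} \<Longrightarrow> {i. i < n \<and> i \<in> I} = I"
  by auto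

lemma pick_lt: assumes "I \<subseteq> {0..<n}" "a < card I" shows "pick I a < n"
  using pick_in_set[of a I] assms by auto

lemma sum_delta_lt: "(p::nat) < n \<Longrightarrow> (\<Sum>j<n. (if j = p then (g j :: real) else 0)) = g p"
  by (subst sum.delta) simp_all

lemma sub_sel:
  assumes A: "A \<in> carrier_mat n n" and I: "I \<subseteq> {0..<n}" and J: "J \<subseteq> {0..<n}"
  shows "submatrix A I J = (sel n I)\<^sup>T * A * sel n J"
proof (rule eq_matI)
  have dI: "card {i. i < dim_row A \<and> i \<in> I} = card I" using A card_restrict[OF I] by simp
  have dJ: "card {i. i < dim_col A \<and> i \<in> J} = card J" using A card_restrict[OF J] by simp
  show "dim_row (submatrix A I J) = dim_row ((sel n I)\<^sup>T * A * sel n J)"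
    using dI by (simp add: dim_submatrix)
  show "dim_col (submatrix A I J) = dim_col ((sel n I)\<^sup>T * A * sel n J)"
    using dJ by (simp add: dim_submatrix)
  fix a b assume a: "a < dim_row ((sel n I)\<^sup>T * A * sel n J)" and b: "b < dim_col ((sel n I)\<^sup>T * A * sel n J)"
  hence a': "a < card I" and b': "b < card J" by auto
  have pa: "pick I a < n" using pick_lt[OF I a'] .
  have pb: "pick J b < n" using pick_lt[OF J b'] .
  have "((sel n I)\<^sup>T * A * sel n J) $$ (a,b) = (\<Sum>j<n. ((sel n I)\<^sup>T * A) $$ (a,j) * sel n J $$ (j,b))"
    using a' b' A by (simp add: scalar_prod_def atLeast0LessThan)
  also have "\<dots> = (\<Sum>j<n. (if j = pick J b then ((sel n I)\<^sup>T * A) $$ (a,j) else 0))"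
    by (intro sum.cong refl) (use b' in \<open>auto simp: sel_def\<close>)
  also have "\<dots> = ((sel n I)\<^sup>T * A) $$ (a, pick J b)" by (rule sum_delta_lt[OF pb])
  also have "\<dots> = (\<Sum>i<n. sel n I $$ (i,a) * A $$ (i, pick J b))"
    using a' pb A by (simp add: scalar_prod_def atLeast0LessThan)
  also have "\<dots> = (\<Sum>i<n. (if i = pick I a then A $$ (i, pick J b) else 0))"
    by (intro sum.cong refl) (use a' in \<open>auto simp: sel_def\<close>)
  also have "\<dots> = A $$ (pick I a, pick J b)" by (rule sum_delta_lt[OF pa])
  also have "\<dots> = submatrix A I J $$ (a,b)" using a' b' dI dJ by (simp add: submatrix_def)
  finally show "submatrix A I J $$ (a,b) = ((sel n I)\<^sup>T * A * sel n J) $$ (a,b)" by simp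
qed

lemma bil:
  fixes A :: "real mat"
  assumes A: "A \<in> carrier_mat n n" and B: "B \<in> carrier_mat n p" and Cm: "Cm \<in> carrier_mat n q"
    and u: "u \<in> carrier_vec p" and v: "v \<in> carrier_vec q"
  shows "u \<bullet> ((B\<^sup>T * A * Cm) *\<^sub>v v) = (B *\<^sub>v u) \<bullet> (A *\<^sub>v (Cm *\<^sub>v v))"
proof -
  have "(B\<^sup>T * A * Cm) *\<^sub>v v = (B\<^sup>T * A) *\<^sub>v (Cm *\<^sub>v v)"
    by (rule assoc_mult_mat_vec) (use A B Cm v in auto)
  also have "\<dots> = B\<^sup>T *\<^sub>v (A *\<^sub>v (Cm *\<^sub>v v))"
    by (rule assoc_mult_mat_vec) (use A B Cm v in auto)
  finally have e: "(B\<^sup>T * A * Cm) *\<^sub>v v = B\<^sup>T *\<^sub>v (A *\<^sub>v (Cm *\<^sub>v v))" .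
  have w: "A *\<^sub>v (Cm *\<^sub>v v) \<in> carrier_vec n" using A Cm v by simp
  have "u \<bullet> (B\<^sup>T *\<^sub>v (A *\<^sub>v (Cm *\<^sub>v v))) = (B\<^sup>T *\<^sub>v (A *\<^sub>v (Cm *\<^sub>v v))) \<bullet> u"
    by (rule comm_scalar_prod[of _ p]) (use u B w in auto)
  also have "\<dots> = (A *\<^sub>v (Cm *\<^sub>v v)) \<bullet> (B *\<^sub>v u)"
    by (rule transpose_vec_mult_scalar[OF B u w])
  also have "\<dots> = (B *\<^sub>v u) \<bullet> (A *\<^sub>v (Cm *\<^sub>v v))"
    by (rule comm_scalar_prod[of _ n]) (use u B w in auto)
  finally show ?thesis using e by simp
qed

lemma sym_swap:
  fixes A :: "real mat"
  assumes A: "A \<in> carrier_mat n n" and sym: "A\<^sup>T = A" and a: "a \<in> carrier_vec n" and b: "b \<in> carrier_vec n"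
  shows "a \<bullet> (A *\<^sub>v b) = b \<bullet> (A *\<^sub>v a)"
proof -
  have "a \<bullet> (A *\<^sub>v b) = (A\<^sup>T *\<^sub>v a) \<bullet> b" using transpose_vec_mult_scalar[OF A b a] by simp
  also have "\<dots> = b \<bullet> (A *\<^sub>v a)" using sym comm_scalar_prod[of "A *\<^sub>v a" n b] A a b by simp
  finally show ?thesis .
qed

lemma quad_split:
  fixes A :: "real mat"
  assumes A: "A \<in> carrier_mat n n" and sym: "A\<^sup>T = A"
    and P: "P \<in> carrier_mat n p" and R: "R \<in> carrier_mat n r"
    and x: "x \<in> carrier_vec p" and y: "y \<in> carrier_vec r"
  shows "(P *\<^sub>v x + R *\<^sub>v y) \<bullet> (A *\<^sub>v (P *\<^sub>v x + R *\<^sub>v y))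
       = x \<bullet> ((P\<^sup>T * A * P) *\<^sub>v x) + 2 * (y \<bullet> ((R\<^sup>T * A * P) *\<^sub>v x)) + y \<bullet> ((R\<^sup>T * A * R) *\<^sub>v y)"
proof -
  have px: "P *\<^sub>v x \<in> carrier_vec n" and ry: "R *\<^sub>v y \<in> carrier_vec n" using P R x y by auto
  have apx: "A *\<^sub>v (P *\<^sub>v x) \<in> carrier_vec n" and ary: "A *\<^sub>v (R *\<^sub>v y) \<in> carrier_vec n" using A px ry by auto
  have "A *\<^sub>v (P *\<^sub>v x + R *\<^sub>v y) = A *\<^sub>v (P *\<^sub>v x) + A *\<^sub>v (R *\<^sub>v y)"
    by (rule mult_add_distrib_mat_vec[OF A px ry])
  hence "(P *\<^sub>v x + R *\<^sub>v y) \<bullet> (A *\<^sub>v (P *\<^sub>v x + R *\<^sub>v y))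
     = (P *\<^sub>v x) \<bullet> (A *\<^sub>v (P *\<^sub>v x)) + (P *\<^sub>v x) \<bullet> (A *\<^sub>v (R *\<^sub>v y))
       + ((R *\<^sub>v y) \<bullet> (A *\<^sub>v (P *\<^sub>v x)) + (R *\<^sub>v y) \<bullet> (A *\<^sub>v (R *\<^sub>v y)))"
    using px ry apx ary by (simp add: add_scalar_prod_distrib scalar_prod_add_distrib)
  also have "(P *\<^sub>v x) \<bullet> (A *\<^sub>v (R *\<^sub>v y)) = (R *\<^sub>v y) \<bullet> (A *\<^sub>v (P *\<^sub>v x))"
    by (rule sym_swap[OF A sym px ry])
  also have "(P *\<^sub>v x) \<bullet> (A *\<^sub>v (P *\<^sub>v x)) = x \<bullet> ((P\<^sup>T * A * P) *\<^sub>v x)" using bil[OF A P P x x] by simp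
  also have "(R *\<^sub>v y) \<bullet> (A *\<^sub>v (P *\<^sub>v x)) = y \<bullet> ((R\<^sup>T * A * P) *\<^sub>v x)" using bil[OF A R P y x] by simp
  also have "(R *\<^sub>v y) \<bullet> (A *\<^sub>v (R *\<^sub>v y)) = y \<bullet> ((R\<^sup>T * A * R) *\<^sub>v y)" using bil[OF A R R y y] by simp
  finally show ?thesis by simp
qed

lemma lap_carrier[simp]: "laplacian n w \<in> carrier_mat n n"
  unfolding laplacian_def degree_mat_def by simp
lemma deg_carrier[simp]: "degree_mat n w \<in> carrier_mat n n"
  unfolding degree_mat_def by simp
lemma lap_dims[simp]: "dim_row (laplacian n w) = n" "dim_col (laplacian n w) = n"
  by (simp_all add: laplacian_def degree_mat_def)
lemma deg_dims[simp]: "dim_row (degree_mat n w) = n" "dim_col (degree_mat n w) = n"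
  by (simp_all add: degree_mat_def)

lemma lap_index: "i < n \<Longrightarrow> j < n \<Longrightarrow> laplacian n w $$ (i,j) = (if i = j then wdeg n w i else 0) - w i j"
  unfolding laplacian_def degree_mat_def by simp
lemma deg_index: "i < n \<Longrightarrow> j < n \<Longrightarrow> degree_mat n w $$ (i,j) = (if i = j then wdeg n w i else 0)"
  unfolding degree_mat_def by simp

lemma lap_sym:
  assumes "weighted_graph n w"
  shows "(laplacian n w)\<^sup>T = laplacian n w"
  by (rule eq_matI) (use assms in \<open>auto simp: lap_index weighted_graph_def\<close>)

lemma deg_sym: "(degree_mat n w)\<^sup>T = degree_mat n w"
  by (rule eq_matI) (auto simp: deg_index)

lemma lap_mult_vec:
  assumes z: "z \<in> carrier_vec n" and i: "i < n"
  shows "(laplacian n w *\<^sub>v z) $ i = (\<Sum>j<n. w i j * (z$i - z$j))"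
proof -
  have "(laplacian n w *\<^sub>v z) $ i = (\<Sum>j<n. laplacian n w $$ (i,j) * z$j)"
    using z i by (simp add: scalar_prod_def atLeast0LessThan)
  also have "\<dots> = (\<Sum>j<n. (if j = i then wdeg n w i * z$i else 0) - w i j * z$j)"
    by (intro sum.cong refl) (use i in \<open>auto simp: lap_index algebra_simps\<close>)
  also have "\<dots> = wdeg n w i * z$i - (\<Sum>j<n. w i j * z$j)"
    using i by (simp add: sum_subtractf)
  also have "\<dots> = (\<Sum>j<n. w i j * (z$i - z$j))"
    unfolding wdeg_def by (simp add: sum_distrib_right sum_distrib_left sum_subtractf algebra_simps)
  finally show ?thesis .
qed

lemma lap_quad:
  assumes wg: "weighted_graph n w" and z: "z \<in> carrier_vec n"
  shows "2 * (z \<bullet> (laplacian n w *\<^sub>v z)) = (\<Sum>i<n. \<Sum>j<n. w i j * (z$i - z$j)^2)"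
proof -
  have "z \<bullet> (laplacian n w *\<^sub>v z) = (\<Sum>i<n. z$i * (laplacian n w *\<^sub>v z) $ i)"
    using z by (simp add: scalar_prod_def atLeast0LessThan)
  also have "\<dots> = (\<Sum>i<n. z$i * (\<Sum>j<n. w i j * (z$i - z$j)))"
    by (intro sum.cong refl) (use z lap_mult_vec[OF z] in \<open>simp del: index_mult_mat_vec\<close>)
  also have "\<dots> = (\<Sum>i<n. \<Sum>j<n. w i j * z$i * (z$i - z$j))"
    by (simp add: sum_distrib_left algebra_simps)
  finally have q: "z \<bullet> (laplacian n w *\<^sub>v z) = (\<Sum>i<n. \<Sum>j<n. w i j * z$i * (z$i - z$j))" .
  also have "\<dots> = (\<Sum>j<n. \<Sum>i<n. w i j * z$i * (z$i - z$j))" by (rule sum.swap)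
  also have "\<dots> = (\<Sum>j<n. \<Sum>i<n. w j i * z$i * (z$i - z$j))"
    by (intro sum.cong refl) (use wg in \<open>auto simp: weighted_graph_def\<close>)
  finally have q2: "z \<bullet> (laplacian n w *\<^sub>v z) = (\<Sum>i<n. \<Sum>j<n. w i j * z$j * (z$j - z$i))" .
  have "2 * (z \<bullet> (laplacian n w *\<^sub>v z)) = (\<Sum>i<n. \<Sum>j<n. w i j * z$i * (z$i - z$j)) + (\<Sum>i<n. \<Sum>j<n. w i j * z$j * (z$j - z$i))"
    using q q2 by simp
  also have "\<dots> = (\<Sum>i<n. \<Sum>j<n. w i j * (z$i - z$j)^2)"
    by (simp add: sum.distrib[symmetric] power2_eq_square algebra_simps)
  finally show ?thesis .
qed

lemma lap_psd:
  assumes wg: "weighted_graph n w" and z: "z \<in> carrier_vec n"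
  shows "z \<bullet> (laplacian n w *\<^sub>v z) \<ge> 0"
proof -
  have "(\<Sum>i<n. \<Sum>j<n. w i j * (z$i - z$j)^2) \<ge> 0"
    by (intro sum_nonneg) (use wg in \<open>auto simp: weighted_graph_def\<close>)
  thus ?thesis using lap_quad[OF wg z] by simp
qed

lemma lap_zero_const:
  assumes wg: "weighted_graph n w" and con: "graph_connected n w" and z: "z \<in> carrier_vec n"
    and q: "z \<bullet> (laplacian n w *\<^sub>v z) = 0" and u: "u < n" and v: "v < n"
  shows "z$u = z$v"
proof -
  have nn: "\<And>i j. i < n \<Longrightarrow> j < n \<Longrightarrow> w i j * (z$i - z$j)^2 \<ge> 0"
    using wg by (auto simp: weighted_graph_def)
  have s0: "(\<Sum>i<n. \<Sum>j<n. w i j * (z$i - z$j)^2) = 0" using lap_quad[OF wg z] q by simp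
  have e: "w i j * (z$i - z$j)^2 = 0" if "i < n" "j < n" for i j
  proof -
    have nn2: "\<And>x. x \<in> {..<n} \<Longrightarrow> 0 \<le> (\<Sum>j<n. w x j * (z $ x - z $ j)\<^sup>2)"
      by (intro sum_nonneg) (use nn in auto)
    have "(\<Sum>j<n. w i j * (z$i - z$j)^2) = 0"
      using s0 sum_nonneg_eq_0_iff[of "{..<n}" "\<lambda>i. \<Sum>j<n. w i j * (z$i - z$j)^2", OF _ nn2] that
      by simp
    thus ?thesis using sum_nonneg_eq_0_iff[of "{..<n}" "\<lambda>j. w i j * (z$i - z$j)^2"] nn that by simp
  qed
  have edge: "z$i = z$j" if "(i,j) \<in> {(i, j). i < n \<and> j < n \<and> w i j > 0}" for i j
    using e[of i j] that by auto
  have "(u, v) \<in> {(i, j). i < n \<and> j < n \<and> w i j > 0}\<^sup>*" using con u v unfolding graph_connected_def by blast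
  thus ?thesis
  proof (induction rule: rtrancl_induct)
    case base then show ?case by simp
  next
    case (step y v)
    have "z$y = z$v" by (rule edge[OF step.hyps(2)])
    thus ?case using step.IH by simp
  qed
qed

lemma deg_pos:
  assumes wg: "weighted_graph n w" and con: "graph_connected n w" and n: "n \<ge> 2" and i: "i < n"
  shows "wdeg n w i > 0"
proof -
  define j :: nat where "j = (if i = 0 then 1 else 0)"
  have j: "j < n" "j \<noteq> i" unfolding j_def using n by auto
  have rt: "(i, j) \<in> {(i, j). i < n \<and> j < n \<and> w i j > 0}\<^sup>*" using con i j unfolding graph_connected_def by blast
  have "\<exists>i'. (i, i') \<in> {(i, j). i < n \<and> j < n \<and> w i j > 0}"
    using rt
  proof (cases rule: converse_rtranclE)
    case base then show ?thesis using j(2) by simp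
  next
    case (step i') then show ?thesis by blast
  qed
  then obtain i' where i': "(i, i') \<in> {(i, j). i < n \<and> j < n \<and> w i j > 0}" by blast
  hence "w i i' > 0" "i' < n" by auto
  moreover have "w i i' \<le> (\<Sum>j<n. w i j)"
    by (rule member_le_sum) (use wg i \<open>i' < n\<close> in \<open>auto simp: weighted_graph_def\<close>)
  ultimately show ?thesis unfolding wdeg_def by linarith
qed

lemma pick_inj:
  assumes "p < card S" "q < card S" "pick S p = pick S q"
  shows "p = q"
proof (rule ccontr)
  assume "p \<noteq> q"
  hence "p < q \<or> q < p" by auto
  thus False
  proof
    assume "p < q" thus False using pick_mono[of q S p] assms by simp
  next
    assume "q < p" thus False using pick_mono[of p S q] assms by simp
  qed
qed

lemma sel_mult_vec:
  assumes y: "y \<in> carrier_vec (card S)" and i: "i < n"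
  shows "(sel n S *\<^sub>v y) $ i = (\<Sum>p<card S. if i = pick S p then y$p else 0)"
  using assms by (auto simp: sel_def scalar_prod_def atLeast0LessThan intro!: sum.cong)

lemma sel_pick:
  assumes S: "S \<subseteq> {0..<n}" and y: "y \<in> carrier_vec (card S)" and p0: "p0 < card S"
  shows "(sel n S *\<^sub>v y) $ (pick S p0) = y $ p0"
proof -
  have "(sel n S *\<^sub>v y) $ (pick S p0) = (\<Sum>p<card S. if p = p0 then y$p else 0)"
    unfolding sel_mult_vec[OF y pick_lt[OF S p0]]
  proof (intro sum.cong refl)
    fix p assume "p \<in> {..<card S}"
    hence "(pick S p0 = pick S p) = (p = p0)" using pick_inj[of p0 S p] p0 by auto
    thus "(if pick S p0 = pick S p then y $ p else 0) = (if p = p0 then y $ p else 0)" by simp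
  qed
  also have "\<dots> = y $ p0" using p0 by (subst sum.delta) auto
  finally show ?thesis .
qed

lemma sel_out:
  assumes S: "S \<subseteq> {0..<n}" and y: "y \<in> carrier_vec (card S)" and i: "i < n" "i \<notin> S"
  shows "(sel n S *\<^sub>v y) $ i = 0"
proof -
  have "pick S p \<in> S" if "p < card S" for p using pick_in_set[of p S] that by auto
  thus ?thesis unfolding sel_mult_vec[OF y i(1)] using i(2) by (auto intro!: sum.neutral)
qed

lemma diag_mult_vec:
  assumes G: "G \<in> carrier_mat n n" and off: "\<And>i j. i < n \<Longrightarrow> j < n \<Longrightarrow> i \<noteq> j \<Longrightarrow> G $$ (i,j) = 0"
    and v: "v \<in> carrier_vec n" and i: "i < n"
  shows "(G *\<^sub>v v) $ i = G $$ (i,i) * v $ i"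
proof -
  have "(G *\<^sub>v v) $ i = (\<Sum>j<n. G $$ (i,j) * v $ j)" using G v i by (simp add: scalar_prod_def atLeast0LessThan)
  also have "\<dots> = (\<Sum>j<n. if j = i then G $$ (i,i) * v $ i else 0)"
    by (intro sum.cong refl) (use off i in auto)
  also have "\<dots> = G $$ (i,i) * v $ i" using i by (subst sum.delta) auto
  finally show ?thesis .
qed

lemma smult_mat_mult_vec:
  assumes "A \<in> carrier_mat n m" "v \<in> carrier_vec m"
  shows "(c \<cdot>\<^sub>m A) *\<^sub>v v = c \<cdot>\<^sub>v (A *\<^sub>v v)"
  by (rule eq_vecI) (use assms in \<open>auto simp: scalar_prod_def sum_distrib_left algebra_simps\<close>)

locale lapset =
  fixes n :: nat and w :: "nat \<Rightarrow> nat \<Rightarrow> real" and C :: "nat set"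
  assumes wg: "weighted_graph n w" and con: "graph_connected n w"
    and Csub: "C \<subseteq> {0..<n}" and Fne: "{0..<n} - C \<noteq> {}" and Ck: "card C \<ge> 2"
begin

definition "Fs = {0..<n} - C"

lemma Fs_sub: "Fs \<subseteq> {0..<n}" unfolding Fs_def by auto
lemma C_Fs_disj: "i \<in> C \<Longrightarrow> i \<notin> Fs" unfolding Fs_def by auto

lemma n_ge: "n \<ge> 3"
proof -
  have "C \<subset> {0..<n}" using Csub Fne by auto
  hence "card C < card {0..<n}" using psubset_card_mono[of "{0..<n}" C] by blast
  moreover have "card {0..<n} = n" by simp
  ultimately show ?thesis using Ck by linarith
qed

lemma dpos: "i < n \<Longrightarrow> wdeg n w i > 0"
proof -
  assume "i < n"
  moreover have "n \<ge> 2" using n_ge by linarith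
  ultimately show ?thesis using deg_pos[OF wg con] by blast
qed

lemma C_ne: "\<exists>c. c \<in> C"
proof (rule ccontr)
  assume "\<not> (\<exists>c. c \<in> C)"
  hence "C = {}" by blast
  thus False using Ck by simp
qed

lemma sub_dims:
  assumes "I \<subseteq> {0..<n}" "J \<subseteq> {0..<n}" "A \<in> carrier_mat n n"
  shows "submatrix A I J \<in> carrier_mat (card I) (card J)"
proof -
  have "dim_row (submatrix A I J) = card {i. i < n \<and> i \<in> I}" using assms(3) by (simp add: dim_submatrix)
  also have "{i. i < n \<and> i \<in> I} = I" by (rule card_restrict[OF assms(1)])
  finally have r: "dim_row (submatrix A I J) = card I" .
  have "dim_col (submatrix A I J) = card {i. i < n \<and> i \<in> J}" using assms(3) by (simp add: dim_submatrix)
  also have "{i. i < n \<and> i \<in> J} = J" by (rule card_restrict[OF assms(2)])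
  finally have c: "dim_col (submatrix A I J) = card J" .
  show ?thesis by (rule carrier_matI[OF r c])
qed

lemma Lff_carrier: "submatrix (laplacian n w) Fs Fs \<in> carrier_mat (card Fs) (card Fs)"
  by (rule sub_dims[OF Fs_sub Fs_sub lap_carrier])

lemma Lff_det: "det (submatrix (laplacian n w) Fs Fs) \<noteq> 0"
proof
  assume "det (submatrix (laplacian n w) Fs Fs) = 0"
  then obtain y where y: "y \<in> carrier_vec (card Fs)" "y \<noteq> 0\<^sub>v (card Fs)"
    "submatrix (laplacian n w) Fs Fs *\<^sub>v y = 0\<^sub>v (card Fs)"
    using det_0_iff_vec_prod_zero[OF Lff_carrier] by blast
  define z where "z = sel n Fs *\<^sub>v y"
  have z: "z \<in> carrier_vec n" unfolding z_def using mult_mat_vec_carrier[OF sel_carrier y(1)] .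
  have "z \<bullet> (laplacian n w *\<^sub>v z) = y \<bullet> (((sel n Fs)\<^sup>T * laplacian n w * sel n Fs) *\<^sub>v y)"
    unfolding z_def by (rule bil[symmetric]) (use y in auto)
  also have "(sel n Fs)\<^sup>T * laplacian n w * sel n Fs = submatrix (laplacian n w) Fs Fs"
    by (rule sub_sel[symmetric]) (use Fs_sub in auto)
  finally have "z \<bullet> (laplacian n w *\<^sub>v z) = 0" using y by simp
  note zc = lap_zero_const[OF wg con z this]
  obtain c where c: "c \<in> C" using C_ne by blast
  have cn: "c < n" using c Csub by auto
  have zc0: "z $ c = 0" unfolding z_def by (rule sel_out[OF Fs_sub y(1) cn C_Fs_disj[OF c]])
  have "y = 0\<^sub>v (card Fs)"
  proof (rule eq_vecI)
    fix p assume "p < dim_vec (0\<^sub>v (card Fs) :: real vec)"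
    hence p: "p < card Fs" by simp
    have "y $ p = z $ (pick Fs p)" unfolding z_def using sel_pick[OF Fs_sub y(1) p] by simp
    also have "\<dots> = z $ c" using zc[OF pick_lt[OF Fs_sub p] cn] .
    finally show "y $ p = 0\<^sub>v (card Fs) $ p" using zc0 p by simp
  qed (use y in simp)
  thus False using y(2) by simp
qed

lemma Lff_inverse:
  "\<exists>Fi. mat_inverse (submatrix (laplacian n w) Fs Fs) = Some Fi \<and>
     submatrix (laplacian n w) Fs Fs * Fi = 1\<^sub>m (card Fs) \<and> Fi * submatrix (laplacian n w) Fs Fs = 1\<^sub>m (card Fs) \<and>
     Fi \<in> carrier_mat (card Fs) (card Fs)"
proof -
  have u: "submatrix (laplacian n w) Fs Fs \<in> Units (ring_mat TYPE(real) (card Fs) ())"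
    by (rule det_non_zero_imp_unit[OF Lff_carrier Lff_det])
  have "mat_inverse (submatrix (laplacian n w) Fs Fs) \<noteq> None"
  proof
    assume "mat_inverse (submatrix (laplacian n w) Fs Fs) = None"
    hence "submatrix (laplacian n w) Fs Fs \<notin> Units (ring_mat TYPE(real) (card Fs) ())"
      by (rule mat_inverse(1)[OF Lff_carrier])
    thus False using u by simp
  qed
  then obtain Fi where Fi: "mat_inverse (submatrix (laplacian n w) Fs Fs) = Some Fi" by blast
  note props = mat_inverse(2)[OF Lff_carrier Fi]
  show ?thesis by (rule exI[of _ Fi]) (use Fi props in simp)
qed

end

context lapset begin

definition "Fi = the (mat_inverse (submatrix (laplacian n w) Fs Fs))"
definition "Bs = submatrix (laplacian n w) Fs C"

lemma Fi_props: "submatrix (laplacian n w) Fs Fs * Fi = 1\<^sub>m (card Fs)"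
  "Fi * submatrix (laplacian n w) Fs Fs = 1\<^sub>m (card Fs)" "Fi \<in> carrier_mat (card Fs) (card Fs)"
  using Lff_inverse unfolding Fi_def by auto

lemma Bs_carrier: "Bs \<in> carrier_mat (card Fs) (card C)"
  unfolding Bs_def by (rule sub_dims[OF Fs_sub Csub lap_carrier])

lemma Lcc_carrier: "submatrix (laplacian n w) C C \<in> carrier_mat (card C) (card C)"
  by (rule sub_dims[OF Csub Csub lap_carrier])

lemma S_eq: "schur_compl (laplacian n w) C = submatrix (laplacian n w) C C - Bs\<^sup>T * Fi * Bs"
  unfolding schur_compl_def Let_def Fi_def Bs_def Fs_def by simp

lemma S_carrier: "schur_compl (laplacian n w) C \<in> carrier_mat (card C) (card C)"
  unfolding S_eq
proof (rule minus_carrier_mat)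
  show "Bs\<^sup>T * Fi * Bs \<in> carrier_mat (card C) (card C)"
    using Bs_carrier Fi_props(3) by (metis mult_carrier_mat transpose_carrier_mat)
qed

lemma sub_sym:
  assumes I: "I \<subseteq> {0..<n}"
  shows "(submatrix (laplacian n w) I I)\<^sup>T = submatrix (laplacian n w) I I"
proof -
  have "(submatrix (laplacian n w) I I)\<^sup>T = ((sel n I)\<^sup>T * laplacian n w * sel n I)\<^sup>T"
    using sub_sel[OF lap_carrier I I] by simp
  also have "\<dots> = (sel n I)\<^sup>T * ((sel n I)\<^sup>T * laplacian n w)\<^sup>T"
    by (rule transpose_mult) auto
  also have "((sel n I)\<^sup>T * laplacian n w)\<^sup>T = (laplacian n w)\<^sup>T * (sel n I)"
    using transpose_mult[of "(sel n I)\<^sup>T" "card I" n "laplacian n w" n] by simp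
  also have "(laplacian n w)\<^sup>T = laplacian n w" by (rule lap_sym[OF wg])
  also have "(sel n I)\<^sup>T * (laplacian n w * sel n I) = (sel n I)\<^sup>T * laplacian n w * sel n I"
    by (rule assoc_mult_mat[symmetric]) auto
  also have "\<dots> = submatrix (laplacian n w) I I" using sub_sel[OF lap_carrier I I] by simp
  finally show ?thesis .
qed

lemma Fi_sym: "Fi\<^sup>T = Fi"
proof -
  let ?F = "submatrix (laplacian n w) Fs Fs"
  have F: "?F \<in> carrier_mat (card Fs) (card Fs)" by (rule Lff_carrier)
  have Fi: "Fi \<in> carrier_mat (card Fs) (card Fs)" by (rule Fi_props(3))
  have "Fi\<^sup>T * ?F = (?F\<^sup>T * Fi)\<^sup>T"
    using transpose_mult[of "?F\<^sup>T" "card Fs" "card Fs" Fi "card Fs"] F Fi by simp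
  also have "?F\<^sup>T = ?F" by (rule sub_sym[OF Fs_sub])
  also have "?F * Fi = 1\<^sub>m (card Fs)" by (rule Fi_props(1))
  finally have l: "Fi\<^sup>T * ?F = 1\<^sub>m (card Fs)" by simp
  have "Fi\<^sup>T = Fi\<^sup>T * (?F * Fi)" using Fi_props(1) Fi by simp
  also have "\<dots> = (Fi\<^sup>T * ?F) * Fi" by (rule assoc_mult_mat[symmetric]) (use F Fi in auto)
  also have "\<dots> = Fi" using l Fi by simp
  finally show ?thesis .
qed

lemma S_sym: "(schur_compl (laplacian n w) C)\<^sup>T = schur_compl (laplacian n w) C"
proof -
  have B: "Bs \<in> carrier_mat (card Fs) (card C)" by (rule Bs_carrier)
  have Fi: "Fi \<in> carrier_mat (card Fs) (card Fs)" by (rule Fi_props(3))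
  have "(Bs\<^sup>T * Fi * Bs)\<^sup>T = Bs\<^sup>T * (Bs\<^sup>T * Fi)\<^sup>T"
    by (rule transpose_mult) (use B Fi in auto)
  also have "(Bs\<^sup>T * Fi)\<^sup>T = Fi\<^sup>T * Bs"
    using transpose_mult[of "Bs\<^sup>T" "card C" "card Fs" Fi "card Fs"] B Fi by simp
  also have "Bs\<^sup>T * (Fi\<^sup>T * Bs) = Bs\<^sup>T * Fi * Bs"
    unfolding Fi_sym by (rule assoc_mult_mat[symmetric]) (use B Fi in auto)
  finally have e: "(Bs\<^sup>T * Fi * Bs)\<^sup>T = Bs\<^sup>T * Fi * Bs" .
  have "(schur_compl (laplacian n w) C)\<^sup>T = (submatrix (laplacian n w) C C)\<^sup>T - (Bs\<^sup>T * Fi * Bs)\<^sup>T"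
    unfolding S_eq by (rule transpose_minus) (use Lcc_carrier B Fi in auto)
  thus ?thesis unfolding e sub_sym[OF Csub] S_eq .
qed

definition "Ym = (-1) \<cdot>\<^sub>m (Fi * Bs)"
definition "Zm = sel n C + sel n Fs * Ym"

lemma Ym_carrier: "Ym \<in> carrier_mat (card Fs) (card C)"
  unfolding Ym_def using Fi_props(3) Bs_carrier by simp

lemma Zm_carrier: "Zm \<in> carrier_mat n (card C)"
  unfolding Zm_def by (rule add_carrier_mat, rule mult_carrier_mat[OF sel_carrier Ym_carrier])

lemma schur_quad:
  assumes x: "x \<in> carrier_vec (card C)"
  shows "(Zm *\<^sub>v x) \<bullet> (laplacian n w *\<^sub>v (Zm *\<^sub>v x)) = x \<bullet> (schur_compl (laplacian n w) C *\<^sub>v x)"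
proof -
  have B: "Bs \<in> carrier_mat (card Fs) (card C)" by (rule Bs_carrier)
  have Fi: "Fi \<in> carrier_mat (card Fs) (card Fs)" by (rule Fi_props(3))
  have Lff: "submatrix (laplacian n w) Fs Fs \<in> carrier_mat (card Fs) (card Fs)" by (rule Lff_carrier)
  define b where "b = Bs *\<^sub>v x"
  have b: "b \<in> carrier_vec (card Fs)" unfolding b_def using B x by simp
  define y where "y = Ym *\<^sub>v x"
  have y: "y \<in> carrier_vec (card Fs)" unfolding y_def using Ym_carrier x by simp
  have y_eq: "y = (-1) \<cdot>\<^sub>v (Fi *\<^sub>v b)"
  proof -
    have "y = (-1) \<cdot>\<^sub>v ((Fi * Bs) *\<^sub>v x)" unfolding y_def Ym_def
      by (rule smult_mat_mult_vec) (use Fi B x in auto)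
    also have "(Fi * Bs) *\<^sub>v x = Fi *\<^sub>v b" unfolding b_def
      by (rule assoc_mult_mat_vec) (use Fi B x in auto)
    finally show ?thesis .
  qed
  have z_eq: "Zm *\<^sub>v x = sel n C *\<^sub>v x + sel n Fs *\<^sub>v y"
  proof -
    have "Zm *\<^sub>v x = sel n C *\<^sub>v x + (sel n Fs * Ym) *\<^sub>v x" unfolding Zm_def
      by (rule add_mult_distrib_mat_vec) (use Ym_carrier x in auto)
    also have "(sel n Fs * Ym) *\<^sub>v x = sel n Fs *\<^sub>v y" unfolding y_def
      by (rule assoc_mult_mat_vec) (use Ym_carrier x in auto)
    finally show ?thesis .
  qed
  have "(Zm *\<^sub>v x) \<bullet> (laplacian n w *\<^sub>v (Zm *\<^sub>v x))
      = x \<bullet> (((sel n C)\<^sup>T * laplacian n w * sel n C) *\<^sub>v x)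
        + 2 * (y \<bullet> (((sel n Fs)\<^sup>T * laplacian n w * sel n C) *\<^sub>v x))
        + y \<bullet> (((sel n Fs)\<^sup>T * laplacian n w * sel n Fs) *\<^sub>v y)"
    unfolding z_eq by (rule quad_split[OF lap_carrier lap_sym[OF wg] sel_carrier sel_carrier x y])
  also have "(sel n C)\<^sup>T * laplacian n w * sel n C = submatrix (laplacian n w) C C"
    by (rule sub_sel[symmetric, OF lap_carrier Csub Csub])
  also have "(sel n Fs)\<^sup>T * laplacian n w * sel n C = Bs"
    unfolding Bs_def by (rule sub_sel[symmetric, OF lap_carrier Fs_sub Csub])
  also have "(sel n Fs)\<^sup>T * laplacian n w * sel n Fs = submatrix (laplacian n w) Fs Fs"
    by (rule sub_sel[symmetric, OF lap_carrier Fs_sub Fs_sub])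
  also have "submatrix (laplacian n w) Fs Fs *\<^sub>v y = (-1) \<cdot>\<^sub>v b"
  proof -
    have "submatrix (laplacian n w) Fs Fs *\<^sub>v y = (-1) \<cdot>\<^sub>v (submatrix (laplacian n w) Fs Fs *\<^sub>v (Fi *\<^sub>v b))"
      unfolding y_eq by (rule mult_mat_vec) (use Lff Fi b in auto)
    also have "submatrix (laplacian n w) Fs Fs *\<^sub>v (Fi *\<^sub>v b) = (submatrix (laplacian n w) Fs Fs * Fi) *\<^sub>v b"
      by (rule assoc_mult_mat_vec[symmetric]) (use Lff Fi b in auto)
    also have "\<dots> = b" using Fi_props(1) b by simp
    finally show ?thesis .
  qed
  also have "y \<bullet> ((-1) \<cdot>\<^sub>v b) = - (y \<bullet> b)"
    using scalar_prod_smult_distrib[OF y b, of "-1"] by simp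
  finally have lhs: "(Zm *\<^sub>v x) \<bullet> (laplacian n w *\<^sub>v (Zm *\<^sub>v x))
      = x \<bullet> (submatrix (laplacian n w) C C *\<^sub>v x) + y \<bullet> b" unfolding b_def by simp
  have BFB: "Bs\<^sup>T * Fi * Bs \<in> carrier_mat (card C) (card C)"
    using Bs_carrier Fi_props(3) by (metis mult_carrier_mat transpose_carrier_mat)
  have yb: "y \<bullet> b = - ((Fi *\<^sub>v b) \<bullet> b)"
    unfolding y_eq using smult_scalar_prod_distrib[of "Fi *\<^sub>v b" "card Fs" b "-1"] Fi b by simp
  have "x \<bullet> (schur_compl (laplacian n w) C *\<^sub>v x)
      = x \<bullet> (submatrix (laplacian n w) C C *\<^sub>v x - (Bs\<^sup>T * Fi * Bs) *\<^sub>v x)"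
    unfolding S_eq
    by (subst minus_mult_distrib_mat_vec[OF Lcc_carrier BFB x]) simp
  also have "\<dots> = x \<bullet> (submatrix (laplacian n w) C C *\<^sub>v x) - x \<bullet> ((Bs\<^sup>T * Fi * Bs) *\<^sub>v x)"
    by (rule scalar_prod_minus_distrib[OF x mult_mat_vec_carrier[OF Lcc_carrier x] mult_mat_vec_carrier[OF BFB x]])
  also have "x \<bullet> ((Bs\<^sup>T * Fi * Bs) *\<^sub>v x) = b \<bullet> (Fi *\<^sub>v b)"
    unfolding b_def by (rule bil[OF Fi B B x x])
  also have "b \<bullet> (Fi *\<^sub>v b) = (Fi *\<^sub>v b) \<bullet> b"
    by (rule comm_scalar_prod[of _ "card Fs"]) (use Fi b in auto)
  finally show ?thesis using lhs yb by simp
qed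

end

lemma submatrix_index:
  assumes "I \<subseteq> {0..<n}" "J \<subseteq> {0..<n}" "A \<in> carrier_mat n n" "a < card I" "b < card J"
  shows "submatrix A I J $$ (a,b) = A $$ (pick I a, pick J b)"
proof -
  have "{i. i < dim_row A \<and> i \<in> I} = I" "{i. i < dim_col A \<and> i \<in> J} = J"
    using card_restrict[OF assms(1)] card_restrict[OF assms(2)] assms(3) by auto
  thus ?thesis unfolding submatrix_def using assms(4,5) by simp
qed

lemma diag_inv_sqrt_index:
  assumes "G \<in> carrier_mat m m" "a < m" "b < m"
  shows "diag_inv_sqrt G $$ (a,b) = (if a = b then 1 / sqrt (G $$ (a,a)) else 0)"
  using assms unfolding diag_inv_sqrt_def by simp

lemma diag_inv_sqrt_carrier: "G \<in> carrier_mat m m \<Longrightarrow> diag_inv_sqrt G \<in> carrier_mat m m"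
  unfolding diag_inv_sqrt_def by simp

lemma diag_inv_sqrt_sym: "G \<in> carrier_mat m m \<Longrightarrow> (diag_inv_sqrt G)\<^sup>T = diag_inv_sqrt G"
  by (rule eq_matI) (auto simp: diag_inv_sqrt_def)


lemma lin2:
  assumes M: "M \<in> carrier_mat m k" and p: "p \<in> carrier_vec k" and q: "q \<in> carrier_vec k"
  shows "M *\<^sub>v (a \<cdot>\<^sub>v p + b \<cdot>\<^sub>v q) = a \<cdot>\<^sub>v (M *\<^sub>v p) + b \<cdot>\<^sub>v (M *\<^sub>v (q :: real vec))"
proof -
  have "M *\<^sub>v (a \<cdot>\<^sub>v p + b \<cdot>\<^sub>v q) = M *\<^sub>v (a \<cdot>\<^sub>v p) + M *\<^sub>v (b \<cdot>\<^sub>v q)"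
    by (rule mult_add_distrib_mat_vec) (use M p q in auto)
  also have "M *\<^sub>v (a \<cdot>\<^sub>v p) = a \<cdot>\<^sub>v (M *\<^sub>v p)" by (rule mult_mat_vec[OF M p])
  also have "M *\<^sub>v (b \<cdot>\<^sub>v q) = b \<cdot>\<^sub>v (M *\<^sub>v q)" by (rule mult_mat_vec[OF M q])
  finally show ?thesis .
qed

lemma sp2:
  assumes v: "v \<in> carrier_vec m" and p: "p \<in> carrier_vec m" and q: "q \<in> carrier_vec m"
  shows "v \<bullet> (a \<cdot>\<^sub>v p + b \<cdot>\<^sub>v q) = a * (v \<bullet> p) + b * (v \<bullet> (q :: real vec))"
proof -
  have "v \<bullet> (a \<cdot>\<^sub>v p + b \<cdot>\<^sub>v q) = v \<bullet> (a \<cdot>\<^sub>v p) + v \<bullet> (b \<cdot>\<^sub>v q)"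
    by (rule scalar_prod_add_distrib) (use v p q in auto)
  also have "v \<bullet> (a \<cdot>\<^sub>v p) = a * (v \<bullet> p)" by (rule scalar_prod_smult_distrib[OF v p])
  also have "v \<bullet> (b \<cdot>\<^sub>v q) = b * (v \<bullet> q)" by (rule scalar_prod_smult_distrib[OF v q])
  finally show ?thesis .
qed

context lapset begin

abbreviation "d \<equiv> wdeg n w"
abbreviation "Dh \<equiv> diag_inv_sqrt (degree_mat n w)"
abbreviation "DhC \<equiv> diag_inv_sqrt (submatrix (degree_mat n w) C C)"
abbreviation "Am \<equiv> Dh * laplacian n w * Dh"
abbreviation "Bm \<equiv> DhC * schur_compl (laplacian n w) C * DhC"

definition "Dsq = mat n n (\<lambda>(i,j). if i = j then sqrt (d i) else 0)"
definition "Tm = Dsq * Zm * DhC"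

lemma Dcc_carrier: "submatrix (degree_mat n w) C C \<in> carrier_mat (card C) (card C)"
  by (rule sub_dims[OF Csub Csub deg_carrier])

lemma Dh_carrier: "Dh \<in> carrier_mat n n" by (rule diag_inv_sqrt_carrier[OF deg_carrier])
lemma DhC_carrier: "DhC \<in> carrier_mat (card C) (card C)" by (rule diag_inv_sqrt_carrier[OF Dcc_carrier])
lemma Dsq_carrier: "Dsq \<in> carrier_mat n n" unfolding Dsq_def by simp

lemma Am_carrier: "Am \<in> carrier_mat n n"
  by (rule mult_carrier_mat[OF mult_carrier_mat[OF Dh_carrier lap_carrier] Dh_carrier])
lemma Bm_carrier: "Bm \<in> carrier_mat (card C) (card C)"
  by (rule mult_carrier_mat[OF mult_carrier_mat[OF DhC_carrier S_carrier] DhC_carrier])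
lemma Tm_carrier: "Tm \<in> carrier_mat n (card C)"
  unfolding Tm_def by (rule mult_carrier_mat[OF mult_carrier_mat[OF Dsq_carrier Zm_carrier] DhC_carrier])

lemma Am_sym: "Am\<^sup>T = Am"
proof -
  have "Am\<^sup>T = Dh\<^sup>T * (Dh * laplacian n w)\<^sup>T" by (rule transpose_mult) (use Dh_carrier in auto)
  also have "(Dh * laplacian n w)\<^sup>T = (laplacian n w)\<^sup>T * Dh\<^sup>T" by (rule transpose_mult) (use Dh_carrier in auto)
  also have "Dh\<^sup>T * ((laplacian n w)\<^sup>T * Dh\<^sup>T) = Am"
    unfolding diag_inv_sqrt_sym[OF deg_carrier] lap_sym[OF wg]
    by (rule assoc_mult_mat[symmetric]) (use Dh_carrier in auto)
  finally show ?thesis .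
qed

lemma Bm_sym: "Bm\<^sup>T = Bm"
proof -
  have "Bm\<^sup>T = DhC\<^sup>T * (DhC * schur_compl (laplacian n w) C)\<^sup>T" by (rule transpose_mult) (use DhC_carrier S_carrier in auto)
  also have "(DhC * schur_compl (laplacian n w) C)\<^sup>T = (schur_compl (laplacian n w) C)\<^sup>T * DhC\<^sup>T"
    by (rule transpose_mult) (use DhC_carrier S_carrier in auto)
  also have "DhC\<^sup>T * ((schur_compl (laplacian n w) C)\<^sup>T * DhC\<^sup>T) = Bm"
    unfolding diag_inv_sqrt_sym[OF Dcc_carrier] S_sym
    by (rule assoc_mult_mat[symmetric]) (use DhC_carrier S_carrier in auto)
  finally show ?thesis .
qed

lemma Tm_apply:
  assumes u: "u \<in> carrier_vec (card C)"
  shows "Tm *\<^sub>v u = Dsq *\<^sub>v (Zm *\<^sub>v (DhC *\<^sub>v u))"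
proof -
  have "Tm *\<^sub>v u = (Dsq * Zm) *\<^sub>v (DhC *\<^sub>v u)" unfolding Tm_def
    by (rule assoc_mult_mat_vec) (use Dsq_carrier Zm_carrier DhC_carrier u in auto)
  also have "\<dots> = Dsq *\<^sub>v (Zm *\<^sub>v (DhC *\<^sub>v u))"
    by (rule assoc_mult_mat_vec) (use Dsq_carrier Zm_carrier DhC_carrier u in auto)
  finally show ?thesis .
qed

lemma K1:
  assumes u: "u \<in> carrier_vec (card C)"
  shows "(Tm *\<^sub>v u) \<bullet> (Am *\<^sub>v (Tm *\<^sub>v u)) = u \<bullet> (Bm *\<^sub>v u)"
proof -
  define x where "x = DhC *\<^sub>v u"
  have x: "x \<in> carrier_vec (card C)" unfolding x_def using DhC_carrier u by simp
  define z where "z = Zm *\<^sub>v x"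
  have z: "z \<in> carrier_vec n" unfolding z_def using Zm_carrier x by simp
  have t: "Tm *\<^sub>v u = Dsq *\<^sub>v z" unfolding z_def x_def by (rule Tm_apply[OF u])
  have tc: "Dsq *\<^sub>v z \<in> carrier_vec n" using Dsq_carrier z by simp
  have Dht: "Dh *\<^sub>v (Dsq *\<^sub>v z) = z"
  proof (rule eq_vecI)
    fix i assume "i < dim_vec z" hence i: "i < n" using z by simp
    have "(Dh *\<^sub>v (Dsq *\<^sub>v z)) $ i = Dh $$ (i,i) * (Dsq *\<^sub>v z) $ i"
      by (rule diag_mult_vec[OF Dh_carrier _ tc i]) (auto simp: diag_inv_sqrt_index[OF deg_carrier])
    also have "(Dsq *\<^sub>v z) $ i = Dsq $$ (i,i) * z $ i"
      by (rule diag_mult_vec[OF Dsq_carrier _ z i]) (auto simp: Dsq_def)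
    finally show "(Dh *\<^sub>v (Dsq *\<^sub>v z)) $ i = z $ i"
      using i dpos[OF i] by (simp add: diag_inv_sqrt_index[OF deg_carrier] Dsq_def deg_index)
  qed (use Dh_carrier z in simp)
  have "(Tm *\<^sub>v u) \<bullet> (Am *\<^sub>v (Tm *\<^sub>v u)) = (Dsq *\<^sub>v z) \<bullet> ((Dh\<^sup>T * laplacian n w * Dh) *\<^sub>v (Dsq *\<^sub>v z))"
    unfolding t diag_inv_sqrt_sym[OF deg_carrier] ..
  also have "\<dots> = (Dh *\<^sub>v (Dsq *\<^sub>v z)) \<bullet> (laplacian n w *\<^sub>v (Dh *\<^sub>v (Dsq *\<^sub>v z)))"
    by (rule bil[OF lap_carrier Dh_carrier Dh_carrier tc tc])
  also have "\<dots> = z \<bullet> (laplacian n w *\<^sub>v z)" unfolding Dht ..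
  also have "\<dots> = x \<bullet> (schur_compl (laplacian n w) C *\<^sub>v x)" unfolding z_def by (rule schur_quad[OF x])
  also have "\<dots> = u \<bullet> ((DhC\<^sup>T * schur_compl (laplacian n w) C * DhC) *\<^sub>v u)"
    unfolding x_def by (rule bil[symmetric, OF S_carrier DhC_carrier DhC_carrier u u])
  also have "DhC\<^sup>T = DhC" by (rule diag_inv_sqrt_sym[OF Dcc_carrier])
  finally show ?thesis .
qed

lemma pick_bij: "bij_betw (pick C) {..<card C} C"
proof -
  have fin: "finite C" using Csub finite_subset by blast
  have inj: "inj_on (pick C) {..<card C}" unfolding inj_on_def using pick_inj by auto
  have sub: "pick C ` {..<card C} \<subseteq> C" using pick_in_set by auto
  have "card (pick C ` {..<card C}) = card C" using card_image[OF inj] by simp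
  hence "pick C ` {..<card C} = C" using card_subset_eq[OF fin sub] by simp
  thus ?thesis using inj unfolding bij_betw_def by simp
qed

lemma Zm_pick:
  assumes x: "x \<in> carrier_vec (card C)" and a: "a < card C"
  shows "(Zm *\<^sub>v x) $ (pick C a) = x $ a"
proof -
  have y: "Ym *\<^sub>v x \<in> carrier_vec (card Fs)" using Ym_carrier x by simp
  have "Zm *\<^sub>v x = sel n C *\<^sub>v x + (sel n Fs * Ym) *\<^sub>v x" unfolding Zm_def
    by (rule add_mult_distrib_mat_vec) (use Ym_carrier x in auto)
  also have "(sel n Fs * Ym) *\<^sub>v x = sel n Fs *\<^sub>v (Ym *\<^sub>v x)"
    by (rule assoc_mult_mat_vec) (use Ym_carrier x in auto)
  finally have ze: "Zm *\<^sub>v x = sel n C *\<^sub>v x + sel n Fs *\<^sub>v (Ym *\<^sub>v x)" .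
  have pc: "pick C a \<in> C" using pick_in_set[of a C] a by simp
  have pn: "pick C a < n" by (rule pick_lt[OF Csub a])
  have "(Zm *\<^sub>v x) $ (pick C a) = (sel n C *\<^sub>v x) $ (pick C a) + (sel n Fs *\<^sub>v (Ym *\<^sub>v x)) $ (pick C a)"
    unfolding ze using pn x y by simp
  also have "(sel n C *\<^sub>v x) $ (pick C a) = x $ a" by (rule sel_pick[OF Csub x a])
  also have "(sel n Fs *\<^sub>v (Ym *\<^sub>v x)) $ (pick C a) = 0"
    by (rule sel_out[OF Fs_sub y pn C_Fs_disj[OF pc]])
  finally show ?thesis by simp
qed

lemma K2:
  assumes u: "u \<in> carrier_vec (card C)"
  shows "(Tm *\<^sub>v u) \<bullet> (Tm *\<^sub>v u) \<ge> u \<bullet> u"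
proof -
  define x where "x = DhC *\<^sub>v u"
  have x: "x \<in> carrier_vec (card C)" unfolding x_def using DhC_carrier u by simp
  define z where "z = Zm *\<^sub>v x"
  have z: "z \<in> carrier_vec n" unfolding z_def using Zm_carrier x by simp
  have t: "Tm *\<^sub>v u = Dsq *\<^sub>v z" unfolding z_def x_def by (rule Tm_apply[OF u])
  have ti: "(Dsq *\<^sub>v z) $ i = sqrt (d i) * z $ i" if i: "i < n" for i
    using diag_mult_vec[OF Dsq_carrier _ z i] i by (auto simp: Dsq_def)
  have xa: "x $ a = u $ a / sqrt (d (pick C a))" if a: "a < card C" for a
  proof -
    have "x $ a = DhC $$ (a,a) * u $ a" unfolding x_def
      by (rule diag_mult_vec[OF DhC_carrier _ u a]) (auto simp: diag_inv_sqrt_index[OF Dcc_carrier])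
    also have "DhC $$ (a,a) = 1 / sqrt (d (pick C a))"
      using a pick_lt[OF Csub a]
      by (simp add: diag_inv_sqrt_index[OF Dcc_carrier] submatrix_index[OF Csub Csub deg_carrier] deg_index)
    finally show ?thesis by simp
  qed
  have dimt: "dim_vec (Dsq *\<^sub>v z) = n" using Dsq_carrier by simp
  have "(Tm *\<^sub>v u) \<bullet> (Tm *\<^sub>v u) = (\<Sum>i<n. (Dsq *\<^sub>v z) $ i * (Dsq *\<^sub>v z) $ i)"
    unfolding t scalar_prod_def dimt atLeast0LessThan ..
  also have "\<dots> = (\<Sum>i<n. d i * (z $ i)^2)"
  proof (intro sum.cong refl)
    fix i assume "i \<in> {..<n}" hence i: "i < n" by simp
    have "sqrt (d i) * sqrt (d i) = d i" using dpos[OF i] by simp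
    thus "(Dsq *\<^sub>v z) $ i * (Dsq *\<^sub>v z) $ i = d i * (z $ i)^2"
      unfolding ti[OF i] by (simp add: power2_eq_square algebra_simps)
  qed
  also have "\<dots> \<ge> (\<Sum>i\<in>C. d i * (z $ i)^2)"
  proof (rule sum_mono2)
    show "C \<subseteq> {..<n}" using Csub by auto
    fix b assume "b \<in> {..<n} - C"
    hence "d b > 0" using dpos by simp
    thus "0 \<le> d b * (z $ b)^2" by simp
  qed simp
  also have "(\<Sum>i\<in>C. d i * (z $ i)^2) = (\<Sum>a<card C. d (pick C a) * (z $ (pick C a))^2)"
    by (rule sum.reindex_bij_betw[symmetric, OF pick_bij])
  also have "\<dots> = (\<Sum>a<card C. (u $ a)^2)"
  proof (intro sum.cong refl)
    fix a assume "a \<in> {..<card C}"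
    hence a: "a < card C" by simp
    have dp: "d (pick C a) > 0" by (rule dpos[OF pick_lt[OF Csub a]])
    have "z $ (pick C a) = u $ a / sqrt (d (pick C a))" unfolding z_def Zm_pick[OF x a] xa[OF a] ..
    thus "d (pick C a) * (z $ (pick C a))^2 = (u $ a)^2" using dp by (simp add: power_divide)
  qed
  also have "\<dots> = u \<bullet> u" using u by (simp add: scalar_prod_def atLeast0LessThan power2_eq_square)
  finally show ?thesis .
qed

lemma K0:
  assumes t: "t \<in> carrier_vec n"
  shows "t \<bullet> (Am *\<^sub>v t) \<ge> 0"
proof -
  have "t \<bullet> (Am *\<^sub>v t) = t \<bullet> ((Dh\<^sup>T * laplacian n w * Dh) *\<^sub>v t)"
    unfolding diag_inv_sqrt_sym[OF deg_carrier] ..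
  also have "\<dots> = (Dh *\<^sub>v t) \<bullet> (laplacian n w *\<^sub>v (Dh *\<^sub>v t))"
    by (rule bil[OF lap_carrier Dh_carrier Dh_carrier t t])
  finally show ?thesis using lap_psd[OF wg, of "Dh *\<^sub>v t"] Dh_carrier t by simp
qed

lemma main_ineq: "lambda2 Bm \<ge> lambda2 Am"
proof (rule ccontr)
  let ?nu = "lambda2 Am" and ?mu = "lambda2 Bm"
  assume "\<not> ?mu \<ge> ?nu"
  hence lt: "?mu < ?nu" by simp
  have n2: "n \<ge> 2" using n_ge by simp
  obtain v0 where v0: "v0 \<in> carrier_vec n"
    and low: "\<And>z. z \<in> carrier_vec n \<Longrightarrow> v0 \<bullet> z = 0 \<Longrightarrow> z \<bullet> (Am *\<^sub>v z) \<ge> ?nu * (z \<bullet> z)"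
    using lambda2_lower[OF Am_carrier Am_sym n2] by blast
  obtain u0 u1 b0 b1 where U: "u0 \<in> carrier_vec (card C)" "u1 \<in> carrier_vec (card C)"
    "u0 \<bullet> u0 = 1" "u1 \<bullet> u1 = 1" "u0 \<bullet> u1 = 0" "Bm *\<^sub>v u0 = b0 \<cdot>\<^sub>v u0" "Bm *\<^sub>v u1 = b1 \<cdot>\<^sub>v u1"
    "b0 \<le> ?mu" "b1 \<le> ?mu"
    using lambda2_upper[OF Bm_carrier Bm_sym Ck] by blast
  have u10: "u1 \<bullet> u0 = 0" using U(5) comm_scalar_prod[OF U(1) U(2)] by simp
  have t0: "Tm *\<^sub>v u0 \<in> carrier_vec n" and t1: "Tm *\<^sub>v u1 \<in> carrier_vec n" using Tm_carrier U by auto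
  define a0 where "a0 = v0 \<bullet> (Tm *\<^sub>v u1)"
  define a1 where "a1 = - (v0 \<bullet> (Tm *\<^sub>v u0))"
  have "\<exists>u. u \<in> carrier_vec (card C) \<and> u \<bullet> u > 0 \<and> u \<bullet> (Bm *\<^sub>v u) \<le> ?mu * (u \<bullet> u) \<and> v0 \<bullet> (Tm *\<^sub>v u) = 0"
  proof (cases "a0 = 0 \<and> a1 = 0")
    case True
    have "u0 \<bullet> (Bm *\<^sub>v u0) = b0" using U(1,3,6) scalar_prod_smult_distrib[OF U(1) U(1), of b0] by simp
    moreover have "v0 \<bullet> (Tm *\<^sub>v u0) = 0" using True unfolding a1_def by simp
    ultimately show ?thesis using U by (intro exI[of _ u0]) auto
  next
    case False
    define u where "u = a0 \<cdot>\<^sub>v u0 + a1 \<cdot>\<^sub>v u1"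
    have u: "u \<in> carrier_vec (card C)" unfolding u_def using U by simp
    have uu0: "u \<bullet> u0 = a0" unfolding u_def using U u10
      by (simp add: add_scalar_prod_distrib smult_scalar_prod_distrib)
    have uu1: "u \<bullet> u1 = a1" unfolding u_def using U u10
      by (simp add: add_scalar_prod_distrib smult_scalar_prod_distrib)
    have uu: "u \<bullet> u = a0^2 + a1^2"
      using sp2[OF u U(1) U(2), of a0 a1] uu0 uu1 unfolding u_def[symmetric] by (simp add: power2_eq_square)
    have pos: "u \<bullet> u > 0" unfolding uu using False by (metis add.commute add_less_same_cancel2 not_sum_power2_lt_zero power_zero_numeral sum_power2_gt_zero_iff)
    have "Bm *\<^sub>v u = a0 \<cdot>\<^sub>v (Bm *\<^sub>v u0) + a1 \<cdot>\<^sub>v (Bm *\<^sub>v u1)"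
      unfolding u_def by (rule lin2[OF Bm_carrier U(1) U(2)])
    also have "\<dots> = (a0 * b0) \<cdot>\<^sub>v u0 + (a1 * b1) \<cdot>\<^sub>v u1" unfolding U(6,7) by (simp add: smult_smult_assoc)
    finally have "u \<bullet> (Bm *\<^sub>v u) = (a0 * b0) * (u \<bullet> u0) + (a1 * b1) * (u \<bullet> u1)"
      using sp2[OF u U(1) U(2)] by simp
    hence ub: "u \<bullet> (Bm *\<^sub>v u) = b0 * a0^2 + b1 * a1^2" unfolding uu0 uu1 by (simp add: power2_eq_square)
    have "b0 * a0^2 + b1 * a1^2 \<le> ?mu * a0^2 + ?mu * a1^2"
      using U(8,9) by (intro add_mono mult_right_mono) auto
    hence q: "u \<bullet> (Bm *\<^sub>v u) \<le> ?mu * (u \<bullet> u)" unfolding ub uu by (simp add: algebra_simps)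
    have "Tm *\<^sub>v u = a0 \<cdot>\<^sub>v (Tm *\<^sub>v u0) + a1 \<cdot>\<^sub>v (Tm *\<^sub>v u1)"
      unfolding u_def by (rule lin2[OF Tm_carrier U(1) U(2)])
    hence "v0 \<bullet> (Tm *\<^sub>v u) = a0 * (v0 \<bullet> (Tm *\<^sub>v u0)) + a1 * (v0 \<bullet> (Tm *\<^sub>v u1))"
      using sp2[OF v0 t0 t1] by simp
    also have "\<dots> = 0" unfolding a0_def a1_def by simp
    finally show ?thesis using u pos q by blast
  qed
  then obtain u where u: "u \<in> carrier_vec (card C)" "u \<bullet> u > 0" "u \<bullet> (Bm *\<^sub>v u) \<le> ?mu * (u \<bullet> u)"
    "v0 \<bullet> (Tm *\<^sub>v u) = 0" by blast
  define t where "t = Tm *\<^sub>v u"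
  have t: "t \<in> carrier_vec n" unfolding t_def using Tm_carrier u(1) by simp
  have e1: "t \<bullet> (Am *\<^sub>v t) = u \<bullet> (Bm *\<^sub>v u)" unfolding t_def by (rule K1[OF u(1)])
  have e2: "t \<bullet> t \<ge> u \<bullet> u" unfolding t_def by (rule K2[OF u(1)])
  have e3: "t \<bullet> (Am *\<^sub>v t) \<ge> 0" by (rule K0[OF t])
  have e4: "t \<bullet> (Am *\<^sub>v t) \<ge> ?nu * (t \<bullet> t)" by (rule low[OF t u(4)[folded t_def]])
  show False
  proof (cases "?mu < 0")
    case True
    have "?mu * (u \<bullet> u) < 0" using True u(2) by (simp add: mult_neg_pos)
    thus False using e1 e3 u(3) by linarith
  next
    case False
    hence nu0: "?nu \<ge> 0" using lt by simp
    have "?nu * (u \<bullet> u) \<le> ?nu * (t \<bullet> t)" by (rule mult_left_mono[OF e2 nu0])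
    moreover have "?mu * (u \<bullet> u) < ?nu * (u \<bullet> u)" using lt u(2) by (rule mult_strict_right_mono)
    ultimately show False using e1 e4 u(3) by linarith
  qed
qed

end

theorem lemma4p3:
  fixes n :: nat and w :: "nat \<Rightarrow> nat \<Rightarrow> real" and C :: "nat set" and \<nu>2 :: real
  assumes "weighted_graph n w"
    and "graph_connected n w"
    and "\<nu>2 = lambda2 (diag_inv_sqrt (degree_mat n w) * laplacian n w * diag_inv_sqrt (degree_mat n w))"
    and "C \<subseteq> {0..<n}"
    and "{0..<n} - C \<noteq> {}"
    and "card C \<ge> 2"
  shows "lambda2 (diag_inv_sqrt (submatrix (degree_mat n w) C C)
                  * schur_compl (laplacian n w) C
                  * diag_inv_sqrt (submatrix (degree_mat n w) C C)) \<ge> \<nu>2"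
proof -
  interpret lapset n w C by unfold_locales (use assms in auto)
  show ?thesis using main_ineq assms(3) by simp
qed

end
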